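(* Let $s\le 4$. Let $A\subset\mathbb{Z}$ be a finite set with $\dim(A)=1$, and let $s$ be the minimum number of pairwise disjoint segments into which $A$ can be decomposed. If $s\le |A|-1$, then $\mathrm{vol}(A)\le 2^{s-1}(|A|-s)+1$.
   Context: A segment is a nonempty set of consecutive integers. Sets $A\subset G$, $B\subset G'$ in abelian groups are Freiman isomorphic of order 2 ($F_2$-isomorphic) if there is a bijection $\phi:A\to B$ with $x+y=z+t \iff \phi(x)+\phi(y)=\phi(z)+\phi(t)$ for all $x,y,z,t\in A$. The dimension $\dim(A)$ of a finite $A\subset\mathbb{Z}$ is the largest $d$ such that some $B\subset\mathbb{Z}^d$ not contained in a hyperplane is $F_2$-isomorphic to $A$. The volume $\mathrm{vol}(A)$ of a $d$-dimensional set $A$ is the minimum cardinality of $\mathrm{conv}(B)\cap\mathbb{Z}^d$ over all $B\subset\mathbb{Z}^d$ $F_2$-isomorphic to $A$; for $1$-dimensional $A$ this equals $\max(\tilde A)+1$ where $\tilde A=(A-\min A)/\gcd(A-\min A)$. *)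

theory Defs
  imports Complex_Main "HOL-Library.Function_Algebras"
begin

definition f2_iso :: "'a::ab_group_add set \<Rightarrow> 'b::ab_group_add set \<Rightarrow> bool" where
  "f2_iso A B \<longleftrightarrow> (\<exists>\<phi>. bij_betw \<phi> A B \<and>
     (\<forall>x\<in>A. \<forall>y\<in>A. \<forall>z\<in>A. \<forall>t\<in>A.
        x + y = z + t \<longleftrightarrow> \<phi> x + \<phi> y = \<phi> z + \<phi> t))"

(* Z^d, represented as integer functions on nat vanishing outside {..<d} *)
definition zvec :: "nat \<Rightarrow> (nat \<Rightarrow> int) set" where
  "zvec d = {x. \<forall>i\<ge>d. x i = 0}"

definition in_hyperplane :: "nat \<Rightarrow> (nat \<Rightarrow> int) set \<Rightarrow> bool" where
  "in_hyperplane d B \<longleftrightarrow> (\<exists>(c::nat \<Rightarrow> real) (b::real). (\<exists>i<d. c i \<noteq> 0) \<and>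
     (\<forall>x\<in>B. (\<Sum>i<d. c i * real_of_int (x i)) = b))"

definition fdim :: "int set \<Rightarrow> nat" where
  "fdim A = (GREATEST d. \<exists>B. B \<subseteq> zvec d \<and> f2_iso A B \<and> \<not> in_hyperplane d B)"

(* conv(B) \<inter> Z^d *)
definition lattice_conv :: "nat \<Rightarrow> (nat \<Rightarrow> int) set \<Rightarrow> (nat \<Rightarrow> int) set" where
  "lattice_conv d B = {p \<in> zvec d. \<exists>S (u :: (nat \<Rightarrow> int) \<Rightarrow> real).
      finite S \<and> S \<subseteq> B \<and> (\<forall>x\<in>S. u x \<ge> 0) \<and> sum u S = 1 \<and>
      (\<forall>i. real_of_int (p i) = (\<Sum>x\<in>S. u x * real_of_int (x i)))}"

definition fvol :: "int set \<Rightarrow> nat" where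
  "fvol A = (INF B \<in> {B. B \<subseteq> zvec (fdim A) \<and> f2_iso A B}. card (lattice_conv (fdim A) B))"

definition segment :: "int set \<Rightarrow> bool" where
  "segment S \<longleftrightarrow> S \<noteq> {} \<and> (\<exists>a b. S = {a..b})"

definition seg_num :: "int set \<Rightarrow> nat" where
  "seg_num A = (LEAST k. \<exists>P. finite P \<and> card P = k \<and> (\<forall>S\<in>P. segment S) \<and>
      pairwise disjnt P \<and> \<Union>P = A)"

end

theory Submission
  imports Defs
begin

lemma fun_vs: "vector_space (\<lambda>(r::real) (f::'x \<Rightarrow> real) x. r * f x)"
  by unfold_locales (auto simp: fun_eq_iff algebra_simps plus_fun_def)

lemma sum_fun_apply: "(\<Sum>i\<in>I. f i) x = (\<Sum>i\<in>I. (f i x :: 'b::comm_monoid_add))"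
  by (induction I rule: infinite_finite_induct) (auto simp: plus_fun_def)

lemma lin_bound:
  fixes B :: "'x set" and F :: "nat \<Rightarrow> 'x \<Rightarrow> real"
  assumes finB: "finite B"
    and indep: "\<And>c. (\<forall>x\<in>B. (\<Sum>i<m. c i * F i x) = 0) \<Longrightarrow> \<forall>i<m. c i = 0"
  shows "m \<le> card B"
proof -
  interpret fv: vector_space "\<lambda>(r::real) (f::'x \<Rightarrow> real) x. r * f x" by (rule fun_vs)
  define G where "G i = (\<lambda>x. if x \<in> B then F i x else 0)" for i
  define D where "D (b::'x) = (\<lambda>x. if x = b then (1::real) else 0)" for b
  have injG: "inj_on G {..<m}"
  proof (rule inj_onI)
    fix i j assume ij: "i \<in> {..<m}" "j \<in> {..<m}" "G i = G j"
    show "i = j"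
    proof (rule ccontr)
      assume ne: "i \<noteq> j"
      define c where "c k = (if k = i then 1 else if k = j then -1 else (0::real))" for k
      have "\<forall>x\<in>B. (\<Sum>k<m. c k * F k x) = 0"
      proof
        fix x assume x: "x \<in> B"
        have "F i x = F j x" using ij(3) x unfolding G_def by (metis (mono_tags))
        have "(\<Sum>k<m. c k * F k x) = (\<Sum>k<m. (if k = i then F i x else 0) + (if k = j then - F j x else 0))"
          by (rule sum.cong) (auto simp: c_def ne)
        also have "\<dots> = F i x - F j x" using ij by (simp add: sum.distrib)
        finally show "(\<Sum>k<m. c k * F k x) = 0" using \<open>F i x = F j x\<close> by simp
      qed
      then have "c i = 0" using indep ij(1) by auto
      then show False by (simp add: c_def)
    qed
  qed
  have indepS: "fv.independent (G ` {..<m})"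
  proof (rule fv.independent_if_scalars_zero)
    show "finite (G ` {..<m})" by simp
    fix f v assume sum0: "(\<Sum>x\<in>G ` {..<m}. (\<lambda>y. f x * x y)) = 0" and v: "v \<in> G ` {..<m}"
    have "(\<Sum>x\<in>G ` {..<m}. (\<lambda>y. f x * x y)) = (\<Sum>i<m. (\<lambda>y. f (G i) * G i y))"
      by (simp add: sum.reindex[OF injG])
    with sum0 have z: "(\<Sum>i<m. (\<lambda>y. f (G i) * G i y)) = 0" by simp
    have "\<forall>x\<in>B. (\<Sum>i<m. f (G i) * F i x) = 0"
    proof
      fix x assume x: "x \<in> B"
      have "(\<Sum>i<m. (\<lambda>y. f (G i) * G i y)) x = 0" using z by simp
      then show "(\<Sum>i<m. f (G i) * F i x) = 0" using x by (simp add: sum_fun_apply G_def)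
    qed
    then have "\<forall>i<m. f (G i) = 0" by (rule indep)
    then show "f v = 0" using v by auto
  qed
  have span: "G ` {..<m} \<subseteq> fv.span (D ` B)"
  proof
    fix v assume "v \<in> G ` {..<m}"
    then obtain i where v: "v = G i" by auto
    have "G i = (\<Sum>b\<in>B. (\<lambda>y. F i b * D b y))"
      by (rule ext) (auto simp: sum_fun_apply G_def D_def finB if_distrib cong: if_cong)
    also have "\<dots> \<in> fv.span (D ` B)"
      by (intro fv.span_sum fv.span_scale fv.span_base) auto
    finally show "v \<in> fv.span (D ` B)" using v by simp
  qed
  have "card (G ` {..<m}) \<le> card (D ` B)"
    using fv.independent_span_bound[OF _ indepS span] finB by auto
  also have "\<dots> \<le> card B" by (rule card_image_le[OF finB])
  finally show ?thesis using card_image[OF injG] by simp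
qed



lemma dim_bound:
  assumes finA: "finite A" and Bz: "B \<subseteq> zvec d" and iso: "f2_iso A B" and nh: "\<not> in_hyperplane d B"
  shows "d \<le> card A"
proof -
  from iso obtain \<phi> where bij: "bij_betw \<phi> A B" unfolding f2_iso_def by blast
  have cardB: "card B = card A" using bij_betw_same_card[OF bij] by simp
  have finB: "finite B" using bij_betw_finite[OF bij] finA by simp
  show ?thesis
  proof (cases "B = {}")
    case True
    show ?thesis
    proof (rule ccontr)
      assume "\<not> d \<le> card A"
      then have "0 < d" by simp
      then have "in_hyperplane d B" unfolding in_hyperplane_def True
        by (intro exI[of _ "\<lambda>i. 1"] exI[of _ 0]) auto
      with nh show False by simp
    qed
  next
    case False
    then obtain p0 where p0: "p0 \<in> B" by auto
    define F where "F i p = (if i < d then real_of_int (p i) else 1)" for i and p :: "nat \<Rightarrow> int"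
    have "Suc d \<le> card B"
    proof (rule lin_bound[OF finB])
      fix c :: "nat \<Rightarrow> real"
      assume h: "\<forall>x\<in>B. (\<Sum>i<Suc d. c i * F i x) = 0"
      have h2: "\<forall>x\<in>B. (\<Sum>i<d. c i * real_of_int (x i)) = - c d"
      proof
        fix x assume "x \<in> B"
        then have "(\<Sum>i<Suc d. c i * F i x) = 0" using h by auto
        moreover have "(\<Sum>i<Suc d. c i * F i x) = (\<Sum>i<d. c i * real_of_int (x i)) + c d"
          by (simp add: F_def)
        ultimately show "(\<Sum>i<d. c i * real_of_int (x i)) = - c d" by simp
      qed
      have z: "\<forall>i<d. c i = 0"
      proof (rule ccontr)
        assume "\<not> (\<forall>i<d. c i = 0)"
        then have "in_hyperplane d B" unfolding in_hyperplane_def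
          using h2 by (intro exI[of _ c] exI[of _ "- c d"]) auto
        with nh show False by simp
      qed
      have "c d = 0" using h2 p0 z by auto
      with z show "\<forall>i<Suc d. c i = 0" using less_Suc_eq by auto
    qed
    then show ?thesis using cardB by simp
  qed
qed

definition Pdim :: "int set \<Rightarrow> nat \<Rightarrow> bool" where
  "Pdim A d \<longleftrightarrow> (\<exists>B. B \<subseteq> zvec d \<and> f2_iso A B \<and> \<not> in_hyperplane d B)"

lemma fdim_ge:
  assumes "finite A" "Pdim A d"
  shows "d \<le> fdim A"
proof -
  have "fdim A = Greatest (Pdim A)" unfolding fdim_def Pdim_def by simp
  moreover have "d \<le> Greatest (Pdim A)"
    by (rule Greatest_le_nat[of "Pdim A" d "card A"]) (use assms dim_bound in \<open>auto simp: Pdim_def\<close>)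
  ultimately show ?thesis by simp
qed


lemma Sform_seg: assumes "segment S" shows "S = {Min S..Max S}" "S \<noteq> {}"
proof -
    obtain l u where ne: "S \<noteq> {}" and Slu: "S = {l..u}" using assms unfolding segment_def by blast
    have lu: "l \<le> u" using ne Slu by auto
    have "Min S = l" unfolding Slu by (rule Min_eqI) (use lu in auto)
    moreover have "Max S = u" unfolding Slu by (rule Max_eqI) (use lu in auto)
    ultimately show "S = {Min S..Max S}" "S \<noteq> {}" using Slu ne by auto
qed

lemma seg_structure:
  assumes finA: "finite A"
  shows "\<exists>a b. (\<forall>j<seg_num A. a j \<le> b j) \<and> (\<forall>j. Suc j < seg_num A \<longrightarrow> b j < a (Suc j))
     \<and> A = (\<Union>j<seg_num A. {a j..b j})"
proof -
  define s where "s = seg_num A"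
  let ?Q = "\<lambda>k. \<exists>P. finite P \<and> card P = k \<and> (\<forall>S\<in>P. segment S) \<and> pairwise disjnt P \<and> \<Union>P = A"
  have ex: "?Q (card A)"
  proof (intro exI[of _ "(\<lambda>x. {x}) ` A"] conjI)
    show "card ((\<lambda>x. {x}) ` A) = card A" by (rule card_image) (auto simp: inj_on_def)
    show "\<forall>S\<in>(\<lambda>x. {x}) ` A. segment S" unfolding segment_def
      by (metis atLeastAtMost_singleton image_iff insert_not_empty)
    show "pairwise disjnt ((\<lambda>x. {x}) ` A)" by (auto simp: pairwise_def disjnt_def)
  qed (use finA in auto)
  have "?Q s" unfolding s_def seg_num_def by (rule LeastI_ex) (use ex in blast)
  then obtain P where finP: "finite P" and cardP: "card P = s" and segP: "\<forall>S\<in>P. segment S"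
    and disP: "pairwise disjnt P" and unP: "\<Union>P = A" by blast
  have Sform: "S = {Min S..Max S}" "S \<noteq> {}" if "S \<in> P" for S
    using Sform_seg segP that by auto
  have injMin: "inj_on Min P"
  proof (rule inj_onI)
    fix S T assume ST: "S \<in> P" "T \<in> P" "Min S = Min T"
    have "Min S \<in> S" using Sform[OF ST(1)] by (metis Min_in finite_atLeastAtMost_int)
    moreover have "Min T \<in> T" using Sform[OF ST(2)] by (metis Min_in finite_atLeastAtMost_int)
    ultimately show "S = T" using disP ST unfolding pairwise_def disjnt_def by auto
  qed
  define xs where "xs = sorted_list_of_set (Min ` P)"
  have finM: "finite (Min ` P)" using finP by simp
  have xs_sorted: "sorted_wrt (<) xs" unfolding xs_def by (rule strict_sorted_list_of_set)
  have xs_set: "set xs = Min ` P" unfolding xs_def using finM by simp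
  have xs_len: "length xs = s" unfolding xs_def using finM card_image[OF injMin] cardP by simp
  define seg where "seg j = inv_into P Min (xs ! j)" for j
  have seg_in: "seg j \<in> P" and seg_min: "Min (seg j) = xs ! j" if "j < s" for j
  proof -
    have "xs ! j \<in> Min ` P" using that xs_len xs_set nth_mem by metis
    then show "seg j \<in> P" "Min (seg j) = xs ! j" unfolding seg_def
      by (auto intro: inv_into_into f_inv_into_f)
  qed
  define a where "a j = xs ! j" for j
  define b where "b j = Max (seg j)" for j
  have seg_eq: "seg j = {a j..b j}" if "j < s" for j
    using Sform[OF seg_in[OF that]] seg_min[OF that] unfolding a_def b_def by simp
  have ab: "a j \<le> b j" if "j < s" for j
    using seg_eq[OF that] Sform(2)[OF seg_in[OF that]] by auto
  have ord: "b j < a (Suc j)" if "Suc j < s" for j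
  proof (rule ccontr)
    assume "\<not> b j < a (Suc j)"
    have lt: "a j < a (Suc j)" unfolding a_def using xs_sorted xs_len that
      by (simp add: sorted_wrt_nth_less)
    have "a (Suc j) \<in> seg j" using seg_eq[of j] that lt \<open>\<not> b j < a (Suc j)\<close> by auto
    moreover have "a (Suc j) \<in> seg (Suc j)" using seg_eq[OF that] ab[OF that] by auto
    moreover have "seg j \<noteq> seg (Suc j)" using seg_min[of j] seg_min[OF that] that lt
      unfolding a_def by auto
    ultimately show False using disP seg_in[of j] seg_in[OF that] that
      unfolding pairwise_def disjnt_def by auto
  qed
  have PA: "P = seg ` {..<s}"
  proof
    show "seg ` {..<s} \<subseteq> P" using seg_in by auto
    show "P \<subseteq> seg ` {..<s}"
    proof
      fix S assume S: "S \<in> P"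
      then have "Min S \<in> set xs" using xs_set by auto
      then obtain j where j: "j < s" "xs ! j = Min S" using xs_len by (metis in_set_conv_nth)
      have "seg j = S" using injMin seg_in[OF j(1)] S seg_min[OF j(1)] j(2)
        unfolding inj_on_def by auto
      then show "S \<in> seg ` {..<s}" using j by auto
    qed
  qed
  have "A = (\<Union>j<s. {a j..b j})" using unP PA seg_eq by auto
  then show ?thesis using ab ord unfolding s_def by blast
qed



definition viol :: "(nat \<Rightarrow> int) \<Rightarrow> (nat \<Rightarrow> int) \<Rightarrow> nat \<Rightarrow> (nat \<Rightarrow> int) \<Rightarrow> bool" where
 "viol a b s c \<longleftrightarrow> (\<exists>i<s. \<exists>j<s. \<exists>k<s. \<exists>l<s. i \<le> j \<and> k \<le> l \<and> ((i < k \<and> l \<le> j) \<or> (i = k \<and> j < l)) \<and>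
    c i + c j \<noteq> c k + c l \<and> a i + a j \<le> b k + b l \<and> a k + a l \<le> b i + b j)"

lemma b_lt_a:
  assumes ab: "\<forall>j<s. a j \<le> b j" and ord: "\<forall>j. Suc j < s \<longrightarrow> b j < (a (Suc j) :: int)"
  shows "i < k \<Longrightarrow> k < s \<Longrightarrow> b i < a k"
proof (induction k)
  case 0 then show ?case by simp
next
  case (Suc k)
  show ?case
  proof (cases "i = k")
    case True then show ?thesis using ord Suc.prems by auto
  next
    case False
    then have "b i < a k" using Suc by auto
    moreover have "a k \<le> b k" using ab Suc.prems by auto
    moreover have "b k < a (Suc k)" using ord Suc.prems by auto
    ultimately show ?thesis by simp
  qed
qed

lemma viol_intro0:
  fixes a b c :: "nat \<Rightarrow> int"
  assumes mono: "\<And>i k. i < k \<Longrightarrow> k < s \<Longrightarrow> b i < a k"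
    and lt: "i < s" "j < s" "k < s" "l < s" and ij: "i \<le> j" and kl: "k \<le> l"
    and cv: "c i + c j \<noteq> c k + c l"
    and r1: "a i + a j \<le> b k + b l" and r2: "a k + a l \<le> b i + b j"
  shows "viol a b s c"
proof -
  have d1: "\<not> (i < k \<and> j < l)"
  proof
    assume "i < k \<and> j < l"
    then have "b i < a k" "b j < a l" using mono lt by auto
    then show False using r2 by simp
  qed
  have d2: "\<not> (k < i \<and> l < j)"
  proof
    assume "k < i \<and> l < j"
    then have "b k < a i" "b l < a j" using mono lt by auto
    then show False using r1 by simp
  qed
  have d3: "\<not> (i = k \<and> j = l)" using cv by auto
  consider "(i < k \<and> l \<le> j) \<or> (i = k \<and> j < l)" | "(k < i \<and> j \<le> l) \<or> (k = i \<and> l < j)"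
    using d1 d2 d3 by linarith
  then show ?thesis
  proof cases
    case 1 then show ?thesis unfolding viol_def using lt ij kl cv r1 r2 by blast
  next
    case 2
    have "c k + c l \<noteq> c i + c j" using cv by simp
    then show ?thesis unfolding viol_def using 2 lt ij kl r1 r2 by blast
  qed
qed

lemma viol_intro:
  fixes a b c :: "nat \<Rightarrow> int"
  assumes mono: "\<And>i k. i < k \<Longrightarrow> k < s \<Longrightarrow> b i < a k"
    and lt: "i < s" "j < s" "k < s" "l < s"
    and cv: "c i + c j \<noteq> c k + c l"
    and r1: "a i + a j \<le> b k + b l" and r2: "a k + a l \<le> b i + b j"
  shows "viol a b s c"
proof (cases "i \<le> j")
  case True
  show ?thesis
  proof (cases "k \<le> l")
    case True
    show ?thesis by (rule viol_intro0[OF mono lt \<open>i \<le> j\<close> True cv r1 r2])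
  next
    case False
    show ?thesis by (rule viol_intro0[of s b a i j l k c, OF mono]) (use lt cv r1 r2 \<open>i \<le> j\<close> False in \<open>auto simp: add.commute\<close>)
  qed
next
  case F1: False
  show ?thesis
  proof (cases "k \<le> l")
    case True
    show ?thesis by (rule viol_intro0[of s b a j i k l c, OF mono]) (use lt cv r1 r2 F1 True in \<open>auto simp: add.commute\<close>)
  next
    case False
    show ?thesis by (rule viol_intro0[of s b a j i l k c, OF mono]) (use lt cv r1 r2 F1 False in \<open>auto simp: add.commute\<close>)
  qed
qed



lemma step_viol:
  fixes a b c :: "nat \<Rightarrow> int"
  assumes finA: "finite A" and fd: "fdim A = 1"
    and Aeq: "A = (\<Union>j<s. {a j..b j})"
    and ab: "\<forall>j<s. a j \<le> b j" and ord: "\<forall>j. Suc j < s \<longrightarrow> b j < a (Suc j)"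
    and j0: "j0 < s" "a j0 < b j0"
    and j1: "j1 < s" "c j1 \<noteq> c 0"
  shows "viol a b s c"
proof (rule ccontr)
  assume nv: "\<not> viol a b s c"
  have mono: "\<And>i k. i < k \<Longrightarrow> k < s \<Longrightarrow> b i < a k" using b_lt_a[OF ab ord] by blast
  define idx where "idx x = (LEAST j. x \<le> b j)" for x
  have idx_eq: "idx x = j" if "j < s" "a j \<le> x" "x \<le> b j" for x j
    unfolding idx_def
  proof (rule Least_equality)
    show "x \<le> b j" by fact
    fix y assume "x \<le> b y"
    show "j \<le> y"
    proof (rule ccontr)
      assume "\<not> j \<le> y" then have "y < j" by simp
      then have "b y < a j" using mono that(1) by blast
      then show False using \<open>x \<le> b y\<close> that(2) by simp
    qed
  qed
  have memA: "\<exists>j<s. a j \<le> x \<and> x \<le> b j" if "x \<in> A" for x using that Aeq by auto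
  define g where "g x = c (idx x)" for x
  have resp: "g x + g y = g z + g t"
    if h: "x \<in> A" "y \<in> A" "z \<in> A" "t \<in> A" "x + y = z + t" for x y z t
  proof (rule ccontr)
    assume ne: "g x + g y \<noteq> g z + g t"
    obtain i where i: "i < s" "a i \<le> x" "x \<le> b i" using memA h(1) by blast
    obtain j where j: "j < s" "a j \<le> y" "y \<le> b j" using memA h(2) by blast
    obtain k where k: "k < s" "a k \<le> z" "z \<le> b k" using memA h(3) by blast
    obtain l where l: "l < s" "a l \<le> t" "t \<le> b l" using memA h(4) by blast
    have "c i + c j \<noteq> c k + c l" using ne idx_eq[OF i] idx_eq[OF j] idx_eq[OF k] idx_eq[OF l]
      unfolding g_def by simp
    moreover have "a i + a j \<le> b k + b l" using i j k l h(5) by linarith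
    moreover have "a k + a l \<le> b i + b j" using i j k l h(5) by linarith
    ultimately have "viol a b s c"
      by (intro viol_intro[where s=s and a=a and b=b and c=c and i=i and j=j and k=k and l=l]) (use mono i(1) j(1) k(1) l(1) in auto)
    with nv show False by simp
  qed
  define \<phi> where "\<phi> x = (\<lambda>n::nat. if n = 0 then x else if n = 1 then g x else 0)" for x
  define B where "B = \<phi> ` A"
  have \<phi>0: "\<phi> x 0 = x" for x unfolding \<phi>_def by simp
  have inj\<phi>: "inj_on \<phi> A" unfolding inj_on_def by (metis \<phi>0)
  have iso: "f2_iso A B"
    unfolding f2_iso_def
  proof (intro exI[of _ \<phi>] conjI ballI)
    show "bij_betw \<phi> A B" unfolding B_def using inj\<phi> by (simp add: bij_betw_def)
    fix x y z t assume xyzt: "x\<in>A" "y\<in>A" "z\<in>A" "t\<in>A"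
    show "x + y = z + t \<longleftrightarrow> \<phi> x + \<phi> y = \<phi> z + \<phi> t"
    proof
      assume e: "x + y = z + t"
      have "g x + g y = g z + g t" by (rule resp[OF xyzt e])
      then show "\<phi> x + \<phi> y = \<phi> z + \<phi> t" using e by (auto simp: \<phi>_def fun_eq_iff plus_fun_def)
    next
      assume "\<phi> x + \<phi> y = \<phi> z + \<phi> t"
      then have "(\<phi> x + \<phi> y) 0 = (\<phi> z + \<phi> t) 0" by simp
      then show "x + y = z + t" by (simp add: \<phi>0 plus_fun_def)
    qed
  qed
  have Bz: "B \<subseteq> zvec 2" unfolding B_def zvec_def \<phi>_def by auto
  have "in_hyperplane 2 B"
  proof (rule ccontr)
    assume "\<not> in_hyperplane 2 B"
    then have "Pdim A 2" unfolding Pdim_def using Bz iso by blast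
    then have "2 \<le> fdim A" using fdim_ge finA by blast
    with fd show False by simp
  qed
  then obtain cc :: "nat \<Rightarrow> real" and bb where ccne: "\<exists>i<2. cc i \<noteq> 0"
    and hb: "\<forall>p\<in>B. (\<Sum>i<2. cc i * real_of_int (p i)) = bb"
    unfolding in_hyperplane_def by blast
  have line: "cc 0 * real_of_int x + cc 1 * real_of_int (g x) = bb" if "x \<in> A" for x
  proof -
    have "(\<Sum>i<2. cc i * real_of_int (\<phi> x i)) = bb" using hb that unfolding B_def by auto
    then show ?thesis by (simp add: \<phi>_def numeral_2_eq_2)
  qed
  have x0: "a j0 \<in> A" "a j0 + 1 \<in> A" using Aeq j0 by (auto intro!: bexI[of _ j0])
  have gx0: "g (a j0) = g (a j0 + 1)" unfolding g_def
    using idx_eq[of j0 "a j0"] idx_eq[of j0 "a j0 + 1"] j0 by simp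
  have "cc 0 = 0" using line[OF x0(1)] line[OF x0(2)] gx0 by (simp add: algebra_simps)
  then have cc1: "cc 1 \<noteq> 0" using ccne by (auto simp: numeral_2_eq_2 less_Suc_eq)
  have s0: "0 < s" using j1 by simp
  have gj: "g (a j) = c j" if "j < s" for j
    unfolding g_def using idx_eq[of j "a j"] that ab by simp
  have aj: "a j \<in> A" if "j < s" for j using Aeq that ab by auto
  have "cc 1 * real_of_int (c j1) = cc 1 * real_of_int (c 0)"
    using line[OF aj[OF j1(1)]] line[OF aj[OF s0]] gj[OF j1(1)] gj[OF s0] \<open>cc 0 = 0\<close> by simp
  then have "c j1 = c 0" using cc1 by simp
  with j1 show False by blast
qed



lemma fvol_le:
  fixes A :: "int set"
  assumes fd: "fdim A = 1" and lo: "\<forall>x\<in>A. L \<le> x" and hi: "\<forall>x\<in>A. x \<le> U"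
  shows "fvol A \<le> nat (U - L + 1)"
proof -
  define emb where "emb x = (\<lambda>i::nat. if i = 0 then x else (0::int))" for x
  define B0 where "B0 = emb ` A"
  have emb0: "emb x 0 = x" for x unfolding emb_def by simp
  have injE: "inj_on emb A" unfolding inj_on_def by (metis emb0)
  have B0z: "B0 \<subseteq> zvec 1" unfolding B0_def zvec_def emb_def by auto
  have iso: "f2_iso A B0"
    unfolding f2_iso_def
  proof (intro exI[of _ emb] conjI ballI)
    show "bij_betw emb A B0" unfolding B0_def using injE by (simp add: bij_betw_def)
    fix x y z t assume xyzt: "x\<in>A" "y\<in>A" "z\<in>A" "t\<in>A"
    show "x + y = z + t \<longleftrightarrow> emb x + emb y = emb z + emb t"
    proof
      assume e: "x + y = z + t"
      then show "emb x + emb y = emb z + emb t" by (auto simp: emb_def fun_eq_iff plus_fun_def)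
    next
      assume "emb x + emb y = emb z + emb t"
      then have "(emb x + emb y) 0 = (emb z + emb t) 0" by simp
      then show "x + y = z + t" by (simp add: emb0 plus_fun_def)
    qed
  qed
  have "fvol A \<le> card (lattice_conv 1 B0)"
    unfolding fvol_def fd
    by (rule cINF_lower) (use B0z iso in \<open>auto intro: bdd_belowI[of _ 0]\<close>)
  also have "lattice_conv 1 B0 \<subseteq> emb ` {L..U}"
  proof
    fix p assume "p \<in> lattice_conv 1 B0"
    then obtain S u where pz: "p \<in> zvec 1" and S: "finite S" "S \<subseteq> B0" and u: "\<forall>x\<in>S. u x \<ge> (0::real)"
      and u1: "sum u S = 1" and pc: "\<forall>i. real_of_int (p i) = (\<Sum>x\<in>S. u x * real_of_int (x i))"
      unfolding lattice_conv_def by blast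
    have xb: "L \<le> x 0 \<and> x 0 \<le> U" if "x \<in> S" for x
      using that S(2) lo hi unfolding B0_def by (auto simp: emb0)
    have "(\<Sum>x\<in>S. u x * real_of_int L) \<le> (\<Sum>x\<in>S. u x * real_of_int (x 0))"
      by (rule sum_mono) (use xb u in \<open>auto intro: mult_left_mono\<close>)
    moreover have "(\<Sum>x\<in>S. u x * real_of_int (x 0)) \<le> (\<Sum>x\<in>S. u x * real_of_int U)"
      by (rule sum_mono) (use xb u in \<open>auto intro: mult_left_mono\<close>)
    moreover have "(\<Sum>x\<in>S. u x * real_of_int L) = real_of_int L" using u1 by (simp add: sum_distrib_right[symmetric])
    moreover have "(\<Sum>x\<in>S. u x * real_of_int U) = real_of_int U" using u1 by (simp add: sum_distrib_right[symmetric])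
    ultimately have "real_of_int L \<le> real_of_int (p 0)" "real_of_int (p 0) \<le> real_of_int U" using pc by auto
    then have "p 0 \<in> {L..U}" by simp
    moreover have "p = emb (p 0)" using pz unfolding zvec_def emb_def by (auto simp: fun_eq_iff)
    ultimately show "p \<in> emb ` {L..U}" by blast
  qed
  then have "card (lattice_conv 1 B0) \<le> card (emb ` {L..U})" by (intro card_mono) auto
  also have "\<dots> \<le> card {L..U}" by (rule card_image_le) simp
  finally show ?thesis by simp
qed


lemma ex4: "(\<exists>i<(4::nat). P i) \<longleftrightarrow> P 0 \<or> P 1 \<or> P 2 \<or> P 3"
  by (auto simp: numeral_eq_Suc less_Suc_eq)
lemma ex3: "(\<exists>i<(3::nat). P i) \<longleftrightarrow> P 0 \<or> P 1 \<or> P 2"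
  by (auto simp: numeral_eq_Suc less_Suc_eq)
lemma ex2: "(\<exists>i<(2::nat). P i) \<longleftrightarrow> P 0 \<or> P 1"
  by (auto simp: numeral_eq_Suc less_Suc_eq)

lemma conv2_0: "viol a b 2 (\<lambda>i. ([0,1]::int list) ! i) \<Longrightarrow> (a 0 + a 0 \<le> b 0 + b 1 \<and> a 0 + a 1 \<le> b 0 + b 0) \<or> (a 0 + a 1 \<le> b 1 + b 1 \<and> a 1 + a 1 \<le> b 0 + b 1)"
  unfolding viol_def ex2 by simp
lemma core2:
  fixes a b :: "nat \<Rightarrow> int"
  assumes "a 0 \<le> b 0" and "a 1 \<le> b 1"
    and "b 0 < a 1"
    and v0: "viol a b 2 (\<lambda>i. ([0,1]::int list) ! i)"
  shows "b 1 - a 0 \<le> 2 * ((b 0 - a 0) + (b 1 - a 1))"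
proof -
  note h0 = conv2_0[OF v0]
  show ?thesis using assms(1-3) h0 by smt
qed
lemma bound2:
  fixes a b :: "nat \<Rightarrow> int"
  assumes finA: "finite A" and fd: "fdim A = 1"
    and Aeq: "A = (\<Union>j<2. {a j..b j})"
    and ab: "\<forall>j<2. a j \<le> b j" and ord: "\<forall>j. Suc j < 2 \<longrightarrow> b j < a (Suc j)"
    and j0: "j0 < 2" "a j0 < b j0"
  shows "b 1 - a 0 \<le> 2 * (\<Sum>j<2. b j - a j)"
proof -
  have v0: "viol a b 2 (\<lambda>i. ([0,1]::int list) ! i)"
    by (rule step_viol[OF finA fd Aeq ab ord j0, of 1]) simp_all
  have o1_0: "a 0 \<le> b 0" using ab by simp
  have o1_1: "a 1 \<le> b 1" using ab by simp
  have o2_0: "b 0 < a 1" using ord[rule_format, of 0] by (simp add: numeral_eq_Suc)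
  have "b 1 - a 0 \<le> 2 * ((b 0 - a 0) + (b 1 - a 1))"
    by (rule core2) (use o1_0 o1_1 o2_0 v0 in simp_all)
  then show ?thesis by (simp add: numeral_eq_Suc)
qed
lemma conv3_0: "viol a b 3 (\<lambda>i. ([0,-1,-2]::int list) ! i) \<Longrightarrow> (a 0 + a 0 \<le> b 0 + b 1 \<and> a 0 + a 1 \<le> b 0 + b 0) \<or> (a 0 + a 0 \<le> b 0 + b 2 \<and> a 0 + a 2 \<le> b 0 + b 0) \<or> (a 0 + a 1 \<le> b 0 + b 2 \<and> a 0 + a 2 \<le> b 0 + b 1) \<or> (a 0 + a 1 \<le> b 1 + b 1 \<and> a 1 + a 1 \<le> b 0 + b 1) \<or> (a 0 + a 2 \<le> b 1 + b 2 \<and> a 1 + a 2 \<le> b 0 + b 2) \<or> (a 0 + a 2 \<le> b 2 + b 2 \<and> a 2 + a 2 \<le> b 0 + b 2) \<or> (a 1 + a 1 \<le> b 1 + b 2 \<and> a 1 + a 2 \<le> b 1 + b 1) \<or> (a 1 + a 2 \<le> b 2 + b 2 \<and> a 2 + a 2 \<le> b 1 + b 2)"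
  unfolding viol_def ex3 by simp
lemma conv3_1: "viol a b 3 (\<lambda>i. ([0,-1,-1]::int list) ! i) \<Longrightarrow> (a 0 + a 0 \<le> b 0 + b 1 \<and> a 0 + a 1 \<le> b 0 + b 0) \<or> (a 0 + a 0 \<le> b 0 + b 2 \<and> a 0 + a 2 \<le> b 0 + b 0) \<or> (a 0 + a 1 \<le> b 1 + b 1 \<and> a 1 + a 1 \<le> b 0 + b 1) \<or> (a 0 + a 2 \<le> b 1 + b 1 \<and> a 1 + a 1 \<le> b 0 + b 2) \<or> (a 0 + a 2 \<le> b 1 + b 2 \<and> a 1 + a 2 \<le> b 0 + b 2) \<or> (a 0 + a 2 \<le> b 2 + b 2 \<and> a 2 + a 2 \<le> b 0 + b 2)"
  unfolding viol_def ex3 by simp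
lemma conv3_2: "viol a b 3 (\<lambda>i. ([0,-1,0]::int list) ! i) \<Longrightarrow> (a 0 + a 0 \<le> b 0 + b 1 \<and> a 0 + a 1 \<le> b 0 + b 0) \<or> (a 0 + a 1 \<le> b 0 + b 2 \<and> a 0 + a 2 \<le> b 0 + b 1) \<or> (a 0 + a 1 \<le> b 1 + b 1 \<and> a 1 + a 1 \<le> b 0 + b 1) \<or> (a 0 + a 2 \<le> b 1 + b 1 \<and> a 1 + a 1 \<le> b 0 + b 2) \<or> (a 0 + a 2 \<le> b 1 + b 2 \<and> a 1 + a 2 \<le> b 0 + b 2) \<or> (a 1 + a 1 \<le> b 1 + b 2 \<and> a 1 + a 2 \<le> b 1 + b 1) \<or> (a 1 + a 2 \<le> b 2 + b 2 \<and> a 2 + a 2 \<le> b 1 + b 2)"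
  unfolding viol_def ex3 by simp
lemma conv3_3: "viol a b 3 (\<lambda>i. ([0,0,-1]::int list) ! i) \<Longrightarrow> (a 0 + a 0 \<le> b 0 + b 2 \<and> a 0 + a 2 \<le> b 0 + b 0) \<or> (a 0 + a 1 \<le> b 0 + b 2 \<and> a 0 + a 2 \<le> b 0 + b 1) \<or> (a 0 + a 2 \<le> b 1 + b 1 \<and> a 1 + a 1 \<le> b 0 + b 2) \<or> (a 0 + a 2 \<le> b 2 + b 2 \<and> a 2 + a 2 \<le> b 0 + b 2) \<or> (a 1 + a 1 \<le> b 1 + b 2 \<and> a 1 + a 2 \<le> b 1 + b 1) \<or> (a 1 + a 2 \<le> b 2 + b 2 \<and> a 2 + a 2 \<le> b 1 + b 2)"
  unfolding viol_def ex3 by simp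
lemma core3:
  fixes a b :: "nat \<Rightarrow> int"
  assumes "a 0 \<le> b 0" and "a 1 \<le> b 1" and "a 2 \<le> b 2"
    and "b 0 < a 1" and "b 1 < a 2"
    and v0: "viol a b 3 (\<lambda>i. ([0,-1,-2]::int list) ! i)"
    and v1: "viol a b 3 (\<lambda>i. ([0,-1,-1]::int list) ! i)"
    and v2: "viol a b 3 (\<lambda>i. ([0,-1,0]::int list) ! i)"
    and v3: "viol a b 3 (\<lambda>i. ([0,0,-1]::int list) ! i)"
  shows "b 2 - a 0 \<le> 4 * ((b 0 - a 0) + (b 1 - a 1) + (b 2 - a 2))"
proof -
  note h0 = conv3_0[OF v0]
  note h1 = conv3_1[OF v1]
  note h2 = conv3_2[OF v2]
  note h3 = conv3_3[OF v3]
  show ?thesis using assms(1-5) h0 h1 h2 h3 by smt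
qed
lemma bound3:
  fixes a b :: "nat \<Rightarrow> int"
  assumes finA: "finite A" and fd: "fdim A = 1"
    and Aeq: "A = (\<Union>j<3. {a j..b j})"
    and ab: "\<forall>j<3. a j \<le> b j" and ord: "\<forall>j. Suc j < 3 \<longrightarrow> b j < a (Suc j)"
    and j0: "j0 < 3" "a j0 < b j0"
  shows "b 2 - a 0 \<le> 4 * (\<Sum>j<3. b j - a j)"
proof -
  have v0: "viol a b 3 (\<lambda>i. ([0,-1,-2]::int list) ! i)"
    by (rule step_viol[OF finA fd Aeq ab ord j0, of 1]) simp_all
  have v1: "viol a b 3 (\<lambda>i. ([0,-1,-1]::int list) ! i)"
    by (rule step_viol[OF finA fd Aeq ab ord j0, of 1]) simp_all
  have v2: "viol a b 3 (\<lambda>i. ([0,-1,0]::int list) ! i)"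
    by (rule step_viol[OF finA fd Aeq ab ord j0, of 1]) simp_all
  have v3: "viol a b 3 (\<lambda>i. ([0,0,-1]::int list) ! i)"
    by (rule step_viol[OF finA fd Aeq ab ord j0, of 2]) simp_all
  have o1_0: "a 0 \<le> b 0" using ab by simp
  have o1_1: "a 1 \<le> b 1" using ab by simp
  have o1_2: "a 2 \<le> b 2" using ab by simp
  have o2_0: "b 0 < a 1" using ord[rule_format, of 0] by (simp add: numeral_eq_Suc)
  have o2_1: "b 1 < a 2" using ord[rule_format, of 1] by (simp add: numeral_eq_Suc)
  have "b 2 - a 0 \<le> 4 * ((b 0 - a 0) + (b 1 - a 1) + (b 2 - a 2))"
    by (rule core3) (use o1_0 o1_1 o1_2 o2_0 o2_1 v0 v1 v2 v3 in simp_all)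
  then show ?thesis by (simp add: numeral_eq_Suc)
qed
lemma conv4_0: "viol a b 4 (\<lambda>i. ([0,-2,-3,-4]::int list) ! i) \<Longrightarrow> (a 0 + a 0 \<le> b 0 + b 1 \<and> a 0 + a 1 \<le> b 0 + b 0) \<or> (a 0 + a 0 \<le> b 0 + b 2 \<and> a 0 + a 2 \<le> b 0 + b 0) \<or> (a 0 + a 0 \<le> b 0 + b 3 \<and> a 0 + a 3 \<le> b 0 + b 0) \<or> (a 0 + a 1 \<le> b 0 + b 2 \<and> a 0 + a 2 \<le> b 0 + b 1) \<or> (a 0 + a 1 \<le> b 0 + b 3 \<and> a 0 + a 3 \<le> b 0 + b 1) \<or> (a 0 + a 1 \<le> b 1 + b 1 \<and> a 1 + a 1 \<le> b 0 + b 1) \<or> (a 0 + a 2 \<le> b 0 + b 3 \<and> a 0 + a 3 \<le> b 0 + b 2) \<or> (a 0 + a 2 \<le> b 1 + b 1 \<and> a 1 + a 1 \<le> b 0 + b 2) \<or> (a 0 + a 2 \<le> b 1 + b 2 \<and> a 1 + a 2 \<le> b 0 + b 2) \<or> (a 0 + a 2 \<le> b 2 + b 2 \<and> a 2 + a 2 \<le> b 0 + b 2) \<or> (a 0 + a 3 \<le> b 1 + b 2 \<and> a 1 + a 2 \<le> b 0 + b 3) \<or> (a 0 + a 3 \<le> b 1 + b 3 \<and> a 1 + a 3 \<le> b 0 + b 3) \<or> (a 0 + a 3 \<le> b 2 + b 2 \<and> a 2 + a 2 \<le> b 0 + b 3) \<or> (a 0 + a 3 \<le> b 2 + b 3 \<and>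 a 2 + a 3 \<le> b 0 + b 3) \<or> (a 0 + a 3 \<le> b 3 + b 3 \<and> a 3 + a 3 \<le> b 0 + b 3) \<or> (a 1 + a 1 \<le> b 1 + b 2 \<and> a 1 + a 2 \<le> b 1 + b 1) \<or> (a 1 + a 1 \<le> b 1 + b 3 \<and> a 1 + a 3 \<le> b 1 + b 1) \<or> (a 1 + a 2 \<le> b 1 + b 3 \<and> a 1 + a 3 \<le> b 1 + b 2) \<or> (a 1 + a 2 \<le> b 2 + b 2 \<and> a 2 + a 2 \<le> b 1 + b 2) \<or> (a 1 + a 3 \<le> b 2 + b 3 \<and> a 2 + a 3 \<le> b 1 + b 3) \<or> (a 1 + a 3 \<le> b 3 + b 3 \<and> a 3 + a 3 \<le> b 1 + b 3) \<or> (a 2 + a 2 \<le> b 2 + b 3 \<and> a 2 + a 3 \<le> b 2 + b 2) \<or> (a 2 + a 3 \<le> b 3 + b 3 \<and> a 3 + a 3 \<le> b 2 + b 3)"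
  unfolding viol_def ex4 by simp
lemma conv4_1: "viol a b 4 (\<lambda>i. ([0,-2,-1,-2]::int list) ! i) \<Longrightarrow> (a 0 + a 0 \<le> b 0 + b 1 \<and> a 0 + a 1 \<le> b 0 + b 0) \<or> (a 0 + a 0 \<le> b 0 + b 2 \<and> a 0 + a 2 \<le> b 0 + b 0) \<or> (a 0 + a 0 \<le> b 0 + b 3 \<and> a 0 + a 3 \<le> b 0 + b 0) \<or> (a 0 + a 1 \<le> b 0 + b 2 \<and> a 0 + a 2 \<le> b 0 + b 1) \<or> (a 0 + a 1 \<le> b 1 + b 1 \<and> a 1 + a 1 \<le> b 0 + b 1) \<or> (a 0 + a 2 \<le> b 0 + b 3 \<and> a 0 + a 3 \<le> b 0 + b 2) \<or> (a 0 + a 2 \<le> b 1 + b 1 \<and> a 1 + a 1 \<le> b 0 + b 2) \<or> (a 0 + a 2 \<le> b 1 + b 2 \<and> a 1 + a 2 \<le> b 0 + b 2) \<or> (a 0 + a 2 \<le> b 2 + b 2 \<and> a 2 + a 2 \<le> b 0 + b 2) \<or> (a 0 + a 3 \<le> b 1 + b 1 \<and> a 1 + a 1 \<le> b 0 + b 3) \<or> (a 0 + a 3 \<le> b 1 + b 2 \<and> a 1 + a 2 \<le> b 0 + b 3) \<or> (a 0 + a 3 \<le> b 1 + b 3 \<and> a 1 + a 3 \<le> b 0 + b 3) \<or> (a 0 + a 3 \<le> b 2 + b 3 \<and> a 2 + a 3 \<le> b 0 + b 3) \<or> (a 0 + a 3 \<le> b 3 + b 3 \<and> a 3 + a 3 \<le>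 b 0 + b 3) \<or> (a 1 + a 1 \<le> b 1 + b 2 \<and> a 1 + a 2 \<le> b 1 + b 1) \<or> (a 1 + a 2 \<le> b 1 + b 3 \<and> a 1 + a 3 \<le> b 1 + b 2) \<or> (a 1 + a 2 \<le> b 2 + b 2 \<and> a 2 + a 2 \<le> b 1 + b 2) \<or> (a 1 + a 3 \<le> b 2 + b 2 \<and> a 2 + a 2 \<le> b 1 + b 3) \<or> (a 1 + a 3 \<le> b 2 + b 3 \<and> a 2 + a 3 \<le> b 1 + b 3) \<or> (a 2 + a 2 \<le> b 2 + b 3 \<and> a 2 + a 3 \<le> b 2 + b 2) \<or> (a 2 + a 3 \<le> b 3 + b 3 \<and> a 3 + a 3 \<le> b 2 + b 3)"
  unfolding viol_def ex4 by simp
lemma conv4_2: "viol a b 4 (\<lambda>i. ([0,-2,-1,0]::int list) ! i) \<Longrightarrow> (a 0 + a 0 \<le> b 0 + b 1 \<and> a 0 + a 1 \<le> b 0 + b 0) \<or> (a 0 + a 0 \<le> b 0 + b 2 \<and> a 0 + a 2 \<le> b 0 + b 0) \<or> (a 0 + a 1 \<le> b 0 + b 2 \<and> a 0 + a 2 \<le> b 0 + b 1) \<or> (a 0 + a 1 \<le> b 0 + b 3 \<and> a 0 + a 3 \<le> b 0 + b 1) \<or> (a 0 + a 1 \<le> b 1 + b 1 \<and> a 1 + a 1 \<le> b 0 + b 1) \<or> (a 0 + a 2 \<le> b 0 + b 3 \<and> a 0 + a 3 \<le> b 0 + b 2) \<or> (a 0 + a 2 \<le> b 1 + b 1 \<and>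 a 1 + a 1 \<le> b 0 + b 2) \<or> (a 0 + a 2 \<le> b 1 + b 2 \<and> a 1 + a 2 \<le> b 0 + b 2) \<or> (a 0 + a 2 \<le> b 2 + b 2 \<and> a 2 + a 2 \<le> b 0 + b 2) \<or> (a 0 + a 3 \<le> b 1 + b 1 \<and> a 1 + a 1 \<le> b 0 + b 3) \<or> (a 0 + a 3 \<le> b 1 + b 2 \<and> a 1 + a 2 \<le> b 0 + b 3) \<or> (a 0 + a 3 \<le> b 1 + b 3 \<and> a 1 + a 3 \<le> b 0 + b 3) \<or> (a 0 + a 3 \<le> b 2 + b 2 \<and> a 2 + a 2 \<le> b 0 + b 3) \<or> (a 0 + a 3 \<le> b 2 + b 3 \<and> a 2 + a 3 \<le> b 0 + b 3) \<or> (a 1 + a 1 \<le> b 1 + b 2 \<and> a 1 + a 2 \<le> b 1 + b 1) \<or> (a 1 + a 1 \<le> b 1 + b 3 \<and> a 1 + a 3 \<le> b 1 + b 1) \<or> (a 1 + a 2 \<le> b 1 + b 3 \<and> a 1 + a 3 \<le> b 1 + b 2) \<or> (a 1 + a 2 \<le> b 2 + b 2 \<and> a 2 + a 2 \<le> b 1 + b 2) \<or> (a 1 + a 3 \<le> b 2 + b 3 \<and> a 2 + a 3 \<le> b 1 + b 3) \<or> (a 1 + a 3 \<le> b 3 + b 3 \<and> a 3 + a 3 \<le> b 1 + b 3) \<or> (a 2 + a 2 \<le> b 2 + b 3 \<and> a 2 + a 3 \<le> b 2 + b 2) \<or> (a 2 + a 3 \<le> b 3 + b 3 \<and> a 3 +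 a 3 \<le> b 2 + b 3)"
  unfolding viol_def ex4 by simp
lemma conv4_3: "viol a b 4 (\<lambda>i. ([0,-1,-2,-4]::int list) ! i) \<Longrightarrow> (a 0 + a 0 \<le> b 0 + b 1 \<and> a 0 + a 1 \<le> b 0 + b 0) \<or> (a 0 + a 0 \<le> b 0 + b 2 \<and> a 0 + a 2 \<le> b 0 + b 0) \<or> (a 0 + a 0 \<le> b 0 + b 3 \<and> a 0 + a 3 \<le> b 0 + b 0) \<or> (a 0 + a 1 \<le> b 0 + b 2 \<and> a 0 + a 2 \<le> b 0 + b 1) \<or> (a 0 + a 1 \<le> b 0 + b 3 \<and> a 0 + a 3 \<le> b 0 + b 1) \<or> (a 0 + a 1 \<le> b 1 + b 1 \<and> a 1 + a 1 \<le> b 0 + b 1) \<or> (a 0 + a 2 \<le> b 0 + b 3 \<and> a 0 + a 3 \<le> b 0 + b 2) \<or> (a 0 + a 2 \<le> b 1 + b 2 \<and> a 1 + a 2 \<le> b 0 + b 2) \<or> (a 0 + a 2 \<le> b 2 + b 2 \<and> a 2 + a 2 \<le> b 0 + b 2) \<or> (a 0 + a 3 \<le> b 1 + b 1 \<and> a 1 + a 1 \<le> b 0 + b 3) \<or> (a 0 + a 3 \<le> b 1 + b 2 \<and> a 1 + a 2 \<le> b 0 + b 3) \<or> (a 0 + a 3 \<le> b 1 + b 3 \<and> a 1 + a 3 \<le> b 0 + b 3) \<or> (a 0 + a 3 \<le> b 2 + b 3 \<and> a 2 + a 3 \<le> b 0 + b 3) \<or> (a 0 + a 3 \<le> b 3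 + b 3 \<and> a 3 + a 3 \<le> b 0 + b 3) \<or> (a 1 + a 1 \<le> b 1 + b 2 \<and> a 1 + a 2 \<le> b 1 + b 1) \<or> (a 1 + a 1 \<le> b 1 + b 3 \<and> a 1 + a 3 \<le> b 1 + b 1) \<or> (a 1 + a 2 \<le> b 1 + b 3 \<and> a 1 + a 3 \<le> b 1 + b 2) \<or> (a 1 + a 2 \<le> b 2 + b 2 \<and> a 2 + a 2 \<le> b 1 + b 2) \<or> (a 1 + a 3 \<le> b 2 + b 2 \<and> a 2 + a 2 \<le> b 1 + b 3) \<or> (a 1 + a 3 \<le> b 2 + b 3 \<and> a 2 + a 3 \<le> b 1 + b 3) \<or> (a 1 + a 3 \<le> b 3 + b 3 \<and> a 3 + a 3 \<le> b 1 + b 3) \<or> (a 2 + a 2 \<le> b 2 + b 3 \<and> a 2 + a 3 \<le> b 2 + b 2) \<or> (a 2 + a 3 \<le> b 3 + b 3 \<and> a 3 + a 3 \<le> b 2 + b 3)"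
  unfolding viol_def ex4 by simp
lemma conv4_4: "viol a b 4 (\<lambda>i. ([0,-1,-2,-3]::int list) ! i) \<Longrightarrow> (a 0 + a 0 \<le> b 0 + b 1 \<and> a 0 + a 1 \<le> b 0 + b 0) \<or> (a 0 + a 0 \<le> b 0 + b 2 \<and> a 0 + a 2 \<le> b 0 + b 0) \<or> (a 0 + a 0 \<le> b 0 + b 3 \<and> a 0 + a 3 \<le> b 0 + b 0) \<or> (a 0 + a 1 \<le> b 0 + b 2 \<and> a 0 + a 2 \<le> b 0 + b 1) \<or> (a 0 + a 1 \<le> b 0 + b 3 \<and> a 0 + a 3 \<le> b 0 + b 1) \<or> (a 0 + a 1 \<le> b 1 + b 1 \<and> a 1 + a 1 \<le> b 0 + b 1) \<or> (a 0 + a 2 \<le> b 0 + b 3 \<and> a 0 + a 3 \<le> b 0 + b 2) \<or> (a 0 + a 2 \<le> b 1 + b 2 \<and> a 1 + a 2 \<le> b 0 + b 2) \<or> (a 0 + a 2 \<le> b 2 + b 2 \<and> a 2 + a 2 \<le> b 0 + b 2) \<or> (a 0 + a 3 \<le> b 1 + b 1 \<and> a 1 + a 1 \<le> b 0 + b 3) \<or> (a 0 + a 3 \<le> b 1 + b 3 \<and> a 1 + a 3 \<le> b 0 + b 3) \<or> (a 0 + a 3 \<le> b 2 + b 2 \<and> a 2 + a 2 \<le> b 0 + b 3) \<or> (a 0 + a 3 \<le> b 2 + b 3 \<and> a 2 + a 3 \<le> b 0 + b 3) \<or> (a 0 + a 3 \<le> b 3 + b 3 \<and> a 3 + a 3 \<le>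 b 0 + b 3) \<or> (a 1 + a 1 \<le> b 1 + b 2 \<and> a 1 + a 2 \<le> b 1 + b 1) \<or> (a 1 + a 1 \<le> b 1 + b 3 \<and> a 1 + a 3 \<le> b 1 + b 1) \<or> (a 1 + a 2 \<le> b 1 + b 3 \<and> a 1 + a 3 \<le> b 1 + b 2) \<or> (a 1 + a 2 \<le> b 2 + b 2 \<and> a 2 + a 2 \<le> b 1 + b 2) \<or> (a 1 + a 3 \<le> b 2 + b 3 \<and> a 2 + a 3 \<le> b 1 + b 3) \<or> (a 1 + a 3 \<le> b 3 + b 3 \<and> a 3 + a 3 \<le> b 1 + b 3) \<or> (a 2 + a 2 \<le> b 2 + b 3 \<and> a 2 + a 3 \<le> b 2 + b 2) \<or> (a 2 + a 3 \<le> b 3 + b 3 \<and> a 3 + a 3 \<le> b 2 + b 3)"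
  unfolding viol_def ex4 by simp
lemma conv4_5: "viol a b 4 (\<lambda>i. ([0,-1,-2,-2]::int list) ! i) \<Longrightarrow> (a 0 + a 0 \<le> b 0 + b 1 \<and> a 0 + a 1 \<le> b 0 + b 0) \<or> (a 0 + a 0 \<le> b 0 + b 2 \<and> a 0 + a 2 \<le> b 0 + b 0) \<or> (a 0 + a 0 \<le> b 0 + b 3 \<and> a 0 + a 3 \<le> b 0 + b 0) \<or> (a 0 + a 1 \<le> b 0 + b 2 \<and> a 0 + a 2 \<le> b 0 + b 1) \<or> (a 0 + a 1 \<le> b 0 + b 3 \<and> a 0 + a 3 \<le> b 0 + b 1) \<or> (a 0 + a 1 \<le> b 1 + b 1 \<and> a 1 + a 1 \<le> b 0 + b 1) \<or> (a 0 + a 2 \<le> b 1 + b 2 \<and> a 1 + a 2 \<le> b 0 + b 2) \<or> (a 0 + a 2 \<le> b 2 + b 2 \<and> a 2 + a 2 \<le> b 0 + b 2) \<or> (a 0 + a 3 \<le> b 1 + b 2 \<and> a 1 + a 2 \<le> b 0 + b 3) \<or> (a 0 + a 3 \<le> b 1 + b 3 \<and> a 1 + a 3 \<le> b 0 + b 3) \<or> (a 0 + a 3 \<le> b 2 + b 2 \<and> a 2 + a 2 \<le> b 0 + b 3) \<or> (a 0 + a 3 \<le> b 2 + b 3 \<and> a 2 + a 3 \<le> b 0 + b 3) \<or> (a 0 + a 3 \<le> b 3 + b 3 \<and> a 3 + a 3 \<le> b 0 + b 3) \<or> (a 1 + a 1 \<le> b 1 + b 2 \<and> a 1 + a 2 \<le>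 b 1 + b 1) \<or> (a 1 + a 1 \<le> b 1 + b 3 \<and> a 1 + a 3 \<le> b 1 + b 1) \<or> (a 1 + a 2 \<le> b 2 + b 2 \<and> a 2 + a 2 \<le> b 1 + b 2) \<or> (a 1 + a 3 \<le> b 2 + b 2 \<and> a 2 + a 2 \<le> b 1 + b 3) \<or> (a 1 + a 3 \<le> b 2 + b 3 \<and> a 2 + a 3 \<le> b 1 + b 3) \<or> (a 1 + a 3 \<le> b 3 + b 3 \<and> a 3 + a 3 \<le> b 1 + b 3)"
  unfolding viol_def ex4 by simp
lemma conv4_6: "viol a b 4 (\<lambda>i. ([0,-1,-2,-1]::int list) ! i) \<Longrightarrow> (a 0 + a 0 \<le> b 0 + b 1 \<and> a 0 + a 1 \<le> b 0 + b 0) \<or> (a 0 + a 0 \<le> b 0 + b 2 \<and> a 0 + a 2 \<le> b 0 + b 0) \<or> (a 0 + a 0 \<le> b 0 + b 3 \<and> a 0 + a 3 \<le> b 0 + b 0) \<or> (a 0 + a 1 \<le> b 0 + b 2 \<and> a 0 + a 2 \<le> b 0 + b 1) \<or> (a 0 + a 1 \<le> b 1 + b 1 \<and> a 1 + a 1 \<le> b 0 + b 1) \<or> (a 0 + a 2 \<le> b 0 + b 3 \<and> a 0 + a 3 \<le> b 0 + b 2) \<or> (a 0 + a 2 \<le> b 1 + b 2 \<and> a 1 + a 2 \<le> b 0 + b 2) \<or> (a 0 + a 2 \<le> b 2 + b 2 \<and> a 2 + a 2 \<le> b 0 + b 2) \<or> (a 0 + a 3 \<le> b 1 + b 1 \<and>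 a 1 + a 1 \<le> b 0 + b 3) \<or> (a 0 + a 3 \<le> b 1 + b 2 \<and> a 1 + a 2 \<le> b 0 + b 3) \<or> (a 0 + a 3 \<le> b 1 + b 3 \<and> a 1 + a 3 \<le> b 0 + b 3) \<or> (a 0 + a 3 \<le> b 2 + b 2 \<and> a 2 + a 2 \<le> b 0 + b 3) \<or> (a 0 + a 3 \<le> b 2 + b 3 \<and> a 2 + a 3 \<le> b 0 + b 3) \<or> (a 0 + a 3 \<le> b 3 + b 3 \<and> a 3 + a 3 \<le> b 0 + b 3) \<or> (a 1 + a 1 \<le> b 1 + b 2 \<and> a 1 + a 2 \<le> b 1 + b 1) \<or> (a 1 + a 2 \<le> b 1 + b 3 \<and> a 1 + a 3 \<le> b 1 + b 2) \<or> (a 1 + a 2 \<le> b 2 + b 2 \<and> a 2 + a 2 \<le> b 1 + b 2) \<or> (a 1 + a 3 \<le> b 2 + b 2 \<and> a 2 + a 2 \<le> b 1 + b 3) \<or> (a 1 + a 3 \<le> b 2 + b 3 \<and> a 2 + a 3 \<le> b 1 + b 3) \<or> (a 2 + a 2 \<le> b 2 + b 3 \<and> a 2 + a 3 \<le> b 2 + b 2) \<or> (a 2 + a 3 \<le> b 3 + b 3 \<and> a 3 + a 3 \<le> b 2 + b 3)"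
  unfolding viol_def ex4 by simp
lemma conv4_7: "viol a b 4 (\<lambda>i. ([0,-1,-2,0]::int list) ! i) \<Longrightarrow> (a 0 + a 0 \<le> b 0 + b 1 \<and> a 0 + a 1 \<le> b 0 + b 0) \<or> (a 0 + a 0 \<le> b 0 + b 2 \<and> a 0 + a 2 \<le> b 0 + b 0) \<or> (a 0 + a 1 \<le> b 0 + b 2 \<and> a 0 + a 2 \<le> b 0 + b 1) \<or> (a 0 + a 1 \<le> b 0 + b 3 \<and> a 0 + a 3 \<le> b 0 + b 1) \<or> (a 0 + a 1 \<le> b 1 + b 1 \<and> a 1 + a 1 \<le> b 0 + b 1) \<or> (a 0 + a 2 \<le> b 0 + b 3 \<and> a 0 + a 3 \<le> b 0 + b 2) \<or> (a 0 + a 2 \<le> b 1 + b 2 \<and> a 1 + a 2 \<le> b 0 + b 2) \<or> (a 0 + a 2 \<le> b 2 + b 2 \<and> a 2 + a 2 \<le> b 0 + b 2) \<or> (a 0 + a 3 \<le> b 1 + b 1 \<and> a 1 + a 1 \<le> b 0 + b 3) \<or> (a 0 + a 3 \<le> b 1 + b 2 \<and> a 1 + a 2 \<le> b 0 + b 3) \<or> (a 0 + a 3 \<le> b 1 + b 3 \<and> a 1 + a 3 \<le> b 0 + b 3) \<or> (a 0 + a 3 \<le> b 2 + b 2 \<and> a 2 + a 2 \<le> b 0 + b 3) \<or> (a 0 + a 3 \<le> b 2 + b 3 \<and> a 2 + a 3 \<le> b 0 + b 3) \<or> (a 1 + a 1 \<le> b 1 + b 2 \<and> a 1 + a 2 \<le>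 b 1 + b 1) \<or> (a 1 + a 1 \<le> b 1 + b 3 \<and> a 1 + a 3 \<le> b 1 + b 1) \<or> (a 1 + a 2 \<le> b 1 + b 3 \<and> a 1 + a 3 \<le> b 1 + b 2) \<or> (a 1 + a 2 \<le> b 2 + b 2 \<and> a 2 + a 2 \<le> b 1 + b 2) \<or> (a 1 + a 3 \<le> b 2 + b 2 \<and> a 2 + a 2 \<le> b 1 + b 3) \<or> (a 1 + a 3 \<le> b 2 + b 3 \<and> a 2 + a 3 \<le> b 1 + b 3) \<or> (a 1 + a 3 \<le> b 3 + b 3 \<and> a 3 + a 3 \<le> b 1 + b 3) \<or> (a 2 + a 2 \<le> b 2 + b 3 \<and> a 2 + a 3 \<le> b 2 + b 2) \<or> (a 2 + a 3 \<le> b 3 + b 3 \<and> a 3 + a 3 \<le> b 2 + b 3)"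
  unfolding viol_def ex4 by simp
lemma conv4_8: "viol a b 4 (\<lambda>i. ([0,-1,-1,-2]::int list) ! i) \<Longrightarrow> (a 0 + a 0 \<le> b 0 + b 1 \<and> a 0 + a 1 \<le> b 0 + b 0) \<or> (a 0 + a 0 \<le> b 0 + b 2 \<and> a 0 + a 2 \<le> b 0 + b 0) \<or> (a 0 + a 0 \<le> b 0 + b 3 \<and> a 0 + a 3 \<le> b 0 + b 0) \<or> (a 0 + a 1 \<le> b 0 + b 3 \<and> a 0 + a 3 \<le> b 0 + b 1) \<or> (a 0 + a 1 \<le> b 1 + b 1 \<and> a 1 + a 1 \<le> b 0 + b 1) \<or> (a 0 + a 2 \<le> b 0 + b 3 \<and> a 0 + a 3 \<le> b 0 + b 2) \<or> (a 0 + a 2 \<le> b 1 + b 1 \<and> a 1 + a 1 \<le> b 0 + b 2) \<or> (a 0 + a 2 \<le> b 1 + b 2 \<and> a 1 + a 2 \<le> b 0 + b 2) \<or> (a 0 + a 2 \<le> b 2 + b 2 \<and> a 2 + a 2 \<le> b 0 + b 2) \<or> (a 0 + a 3 \<le> b 1 + b 3 \<and> a 1 + a 3 \<le> b 0 + b 3) \<or> (a 0 + a 3 \<le> b 2 + b 3 \<and> a 2 + a 3 \<le> b 0 + b 3) \<or> (a 0 + a 3 \<le> b 3 + b 3 \<and> a 3 + a 3 \<le> b 0 + b 3) \<or> (a 1 + a 1 \<le> b 1 + b 3 \<and> a 1 + a 3 \<le> b 1 + b 1) \<or> (a 1 + a 2 \<le> b 1 + b 3 \<and> a 1 + a 3 \<le>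 b 1 + b 2) \<or> (a 1 + a 3 \<le> b 2 + b 2 \<and> a 2 + a 2 \<le> b 1 + b 3) \<or> (a 1 + a 3 \<le> b 3 + b 3 \<and> a 3 + a 3 \<le> b 1 + b 3) \<or> (a 2 + a 2 \<le> b 2 + b 3 \<and> a 2 + a 3 \<le> b 2 + b 2) \<or> (a 2 + a 3 \<le> b 3 + b 3 \<and> a 3 + a 3 \<le> b 2 + b 3)"
  unfolding viol_def ex4 by simp
lemma conv4_9: "viol a b 4 (\<lambda>i. ([0,-1,-1,-1]::int list) ! i) \<Longrightarrow> (a 0 + a 0 \<le> b 0 + b 1 \<and> a 0 + a 1 \<le> b 0 + b 0) \<or> (a 0 + a 0 \<le> b 0 + b 2 \<and> a 0 + a 2 \<le> b 0 + b 0) \<or> (a 0 + a 0 \<le> b 0 + b 3 \<and> a 0 + a 3 \<le> b 0 + b 0) \<or> (a 0 + a 1 \<le> b 1 + b 1 \<and> a 1 + a 1 \<le> b 0 + b 1) \<or> (a 0 + a 2 \<le> b 1 + b 1 \<and> a 1 + a 1 \<le> b 0 + b 2) \<or> (a 0 + a 2 \<le> b 1 + b 2 \<and> a 1 + a 2 \<le> b 0 + b 2) \<or> (a 0 + a 2 \<le> b 2 + b 2 \<and> a 2 + a 2 \<le> b 0 + b 2) \<or> (a 0 + a 3 \<le> b 1 + b 1 \<and> a 1 + a 1 \<le> b 0 + b 3) \<or> (a 0 + a 3 \<le> b 1 + b 2 \<and> a 1 + a 2 \<le> b 0 + b 3) \<or> (a 0 + a 3 \<le> b 1 + b 3 \<and>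 a 1 + a 3 \<le> b 0 + b 3) \<or> (a 0 + a 3 \<le> b 2 + b 2 \<and> a 2 + a 2 \<le> b 0 + b 3) \<or> (a 0 + a 3 \<le> b 2 + b 3 \<and> a 2 + a 3 \<le> b 0 + b 3) \<or> (a 0 + a 3 \<le> b 3 + b 3 \<and> a 3 + a 3 \<le> b 0 + b 3)"
  unfolding viol_def ex4 by simp
lemma conv4_10: "viol a b 4 (\<lambda>i. ([0,-1,-1,0]::int list) ! i) \<Longrightarrow> (a 0 + a 0 \<le> b 0 + b 1 \<and> a 0 + a 1 \<le> b 0 + b 0) \<or> (a 0 + a 0 \<le> b 0 + b 2 \<and> a 0 + a 2 \<le> b 0 + b 0) \<or> (a 0 + a 1 \<le> b 0 + b 3 \<and> a 0 + a 3 \<le> b 0 + b 1) \<or> (a 0 + a 1 \<le> b 1 + b 1 \<and> a 1 + a 1 \<le> b 0 + b 1) \<or> (a 0 + a 2 \<le> b 0 + b 3 \<and> a 0 + a 3 \<le> b 0 + b 2) \<or> (a 0 + a 2 \<le> b 1 + b 1 \<and> a 1 + a 1 \<le> b 0 + b 2) \<or> (a 0 + a 2 \<le> b 1 + b 2 \<and> a 1 + a 2 \<le> b 0 + b 2) \<or> (a 0 + a 2 \<le> b 2 + b 2 \<and> a 2 + a 2 \<le> b 0 + b 2) \<or> (a 0 + a 3 \<le> b 1 + b 1 \<and> a 1 + a 1 \<le> b 0 + b 3) \<or> (a 0 + a 3 \<le> b 1 + b 2 \<and> a 1 + a 2 \<le> b 0 + b 3) \<or> (a 0 + a 3 \<le>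 b 1 + b 3 \<and> a 1 + a 3 \<le> b 0 + b 3) \<or> (a 0 + a 3 \<le> b 2 + b 2 \<and> a 2 + a 2 \<le> b 0 + b 3) \<or> (a 0 + a 3 \<le> b 2 + b 3 \<and> a 2 + a 3 \<le> b 0 + b 3) \<or> (a 1 + a 1 \<le> b 1 + b 3 \<and> a 1 + a 3 \<le> b 1 + b 1) \<or> (a 1 + a 2 \<le> b 1 + b 3 \<and> a 1 + a 3 \<le> b 1 + b 2) \<or> (a 1 + a 3 \<le> b 2 + b 2 \<and> a 2 + a 2 \<le> b 1 + b 3) \<or> (a 1 + a 3 \<le> b 3 + b 3 \<and> a 3 + a 3 \<le> b 1 + b 3) \<or> (a 2 + a 2 \<le> b 2 + b 3 \<and> a 2 + a 3 \<le> b 2 + b 2) \<or> (a 2 + a 3 \<le> b 3 + b 3 \<and> a 3 + a 3 \<le> b 2 + b 3)"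
  unfolding viol_def ex4 by simp
lemma conv4_11: "viol a b 4 (\<lambda>i. ([0,-1,0,-2]::int list) ! i) \<Longrightarrow> (a 0 + a 0 \<le> b 0 + b 1 \<and> a 0 + a 1 \<le> b 0 + b 0) \<or> (a 0 + a 0 \<le> b 0 + b 3 \<and> a 0 + a 3 \<le> b 0 + b 0) \<or> (a 0 + a 1 \<le> b 0 + b 2 \<and> a 0 + a 2 \<le> b 0 + b 1) \<or> (a 0 + a 1 \<le> b 0 + b 3 \<and> a 0 + a 3 \<le> b 0 + b 1) \<or> (a 0 + a 1 \<le> b 1 + b 1 \<and> a 1 + a 1 \<le> b 0 + b 1) \<or> (a 0 + a 2 \<le> b 0 + b 3 \<and> a 0 + a 3 \<le> b 0 + b 2) \<or> (a 0 + a 2 \<le> b 1 + b 1 \<and> a 1 + a 1 \<le> b 0 + b 2) \<or> (a 0 + a 2 \<le> b 1 + b 2 \<and> a 1 + a 2 \<le> b 0 + b 2) \<or> (a 0 + a 3 \<le> b 1 + b 2 \<and> a 1 + a 2 \<le> b 0 + b 3) \<or> (a 0 + a 3 \<le> b 1 + b 3 \<and> a 1 + a 3 \<le> b 0 + b 3) \<or> (a 0 + a 3 \<le> b 2 + b 2 \<and> a 2 + a 2 \<le> b 0 + b 3) \<or> (a 0 + a 3 \<le> b 3 + b 3 \<and> a 3 + a 3 \<le> b 0 + b 3) \<or> (a 1 + a 1 \<le> b 1 + b 2 \<and> a 1 + a 2 \<le> b 1 + b 1) \<or> (a 1 + a 1 \<le> b 1 + b 3 \<and> a 1 + a 3 \<le>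 b 1 + b 1) \<or> (a 1 + a 2 \<le> b 1 + b 3 \<and> a 1 + a 3 \<le> b 1 + b 2) \<or> (a 1 + a 2 \<le> b 2 + b 2 \<and> a 2 + a 2 \<le> b 1 + b 2) \<or> (a 1 + a 3 \<le> b 2 + b 2 \<and> a 2 + a 2 \<le> b 1 + b 3) \<or> (a 1 + a 3 \<le> b 2 + b 3 \<and> a 2 + a 3 \<le> b 1 + b 3) \<or> (a 1 + a 3 \<le> b 3 + b 3 \<and> a 3 + a 3 \<le> b 1 + b 3) \<or> (a 2 + a 2 \<le> b 2 + b 3 \<and> a 2 + a 3 \<le> b 2 + b 2) \<or> (a 2 + a 3 \<le> b 3 + b 3 \<and> a 3 + a 3 \<le> b 2 + b 3)"
  unfolding viol_def ex4 by simp
lemma conv4_12: "viol a b 4 (\<lambda>i. ([0,-1,0,-1]::int list) ! i) \<Longrightarrow> (a 0 + a 0 \<le> b 0 + b 1 \<and> a 0 + a 1 \<le> b 0 + b 0) \<or> (a 0 + a 0 \<le> b 0 + b 3 \<and> a 0 + a 3 \<le> b 0 + b 0) \<or> (a 0 + a 1 \<le> b 0 + b 2 \<and> a 0 + a 2 \<le> b 0 + b 1) \<or> (a 0 + a 1 \<le> b 1 + b 1 \<and> a 1 + a 1 \<le> b 0 + b 1) \<or> (a 0 + a 2 \<le> b 0 + b 3 \<and> a 0 + a 3 \<le> b 0 + b 2) \<or> (a 0 + a 2 \<le> b 1 + b 1 \<and> a 1 + a 1 \<le> b 0 + b 2) \<or> (a 0 + a 2 \<le> b 1 + b 2 \<and>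 a 1 + a 2 \<le> b 0 + b 2) \<or> (a 0 + a 3 \<le> b 1 + b 1 \<and> a 1 + a 1 \<le> b 0 + b 3) \<or> (a 0 + a 3 \<le> b 1 + b 3 \<and> a 1 + a 3 \<le> b 0 + b 3) \<or> (a 0 + a 3 \<le> b 2 + b 2 \<and> a 2 + a 2 \<le> b 0 + b 3) \<or> (a 0 + a 3 \<le> b 3 + b 3 \<and> a 3 + a 3 \<le> b 0 + b 3) \<or> (a 1 + a 1 \<le> b 1 + b 2 \<and> a 1 + a 2 \<le> b 1 + b 1) \<or> (a 1 + a 2 \<le> b 1 + b 3 \<and> a 1 + a 3 \<le> b 1 + b 2) \<or> (a 1 + a 2 \<le> b 2 + b 2 \<and> a 2 + a 2 \<le> b 1 + b 2) \<or> (a 1 + a 3 \<le> b 2 + b 2 \<and> a 2 + a 2 \<le> b 1 + b 3) \<or> (a 1 + a 3 \<le> b 2 + b 3 \<and> a 2 + a 3 \<le> b 1 + b 3) \<or> (a 2 + a 2 \<le> b 2 + b 3 \<and> a 2 + a 3 \<le> b 2 + b 2) \<or> (a 2 + a 3 \<le> b 3 + b 3 \<and> a 3 + a 3 \<le> b 2 + b 3)"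
  unfolding viol_def ex4 by simp
lemma conv4_13: "viol a b 4 (\<lambda>i. ([0,-1,0,0]::int list) ! i) \<Longrightarrow> (a 0 + a 0 \<le> b 0 + b 1 \<and> a 0 + a 1 \<le> b 0 + b 0) \<or> (a 0 + a 1 \<le> b 0 + b 2 \<and> a 0 + a 2 \<le> b 0 + b 1) \<or> (a 0 + a 1 \<le> b 0 + b 3 \<and> a 0 + a 3 \<le> b 0 + b 1) \<or> (a 0 + a 1 \<le> b 1 + b 1 \<and> a 1 + a 1 \<le> b 0 + b 1) \<or> (a 0 + a 2 \<le> b 1 + b 1 \<and> a 1 + a 1 \<le> b 0 + b 2) \<or> (a 0 + a 2 \<le> b 1 + b 2 \<and> a 1 + a 2 \<le> b 0 + b 2) \<or> (a 0 + a 3 \<le> b 1 + b 1 \<and> a 1 + a 1 \<le> b 0 + b 3) \<or> (a 0 + a 3 \<le> b 1 + b 2 \<and> a 1 + a 2 \<le> b 0 + b 3) \<or> (a 0 + a 3 \<le> b 1 + b 3 \<and> a 1 + a 3 \<le> b 0 + b 3) \<or> (a 1 + a 1 \<le> b 1 + b 2 \<and> a 1 + a 2 \<le> b 1 + b 1) \<or> (a 1 + a 1 \<le> b 1 + b 3 \<and> a 1 + a 3 \<le> b 1 + b 1) \<or> (a 1 + a 2 \<le> b 2 + b 2 \<and> a 2 + a 2 \<le> b 1 + b 2) \<or> (a 1 + a 3 \<le> b 2 + b 2 \<and> a 2 + a 2 \<le> b 1 + b 3) \<or> (a 1 + a 3 \<le> b 2 + b 3 \<and> a 2 + a 3 \<le>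 b 1 + b 3) \<or> (a 1 + a 3 \<le> b 3 + b 3 \<and> a 3 + a 3 \<le> b 1 + b 3)"
  unfolding viol_def ex4 by simp
lemma conv4_14: "viol a b 4 (\<lambda>i. ([0,-1,0,1]::int list) ! i) \<Longrightarrow> (a 0 + a 0 \<le> b 0 + b 1 \<and> a 0 + a 1 \<le> b 0 + b 0) \<or> (a 0 + a 0 \<le> b 0 + b 3 \<and> a 0 + a 3 \<le> b 0 + b 0) \<or> (a 0 + a 1 \<le> b 0 + b 2 \<and> a 0 + a 2 \<le> b 0 + b 1) \<or> (a 0 + a 1 \<le> b 0 + b 3 \<and> a 0 + a 3 \<le> b 0 + b 1) \<or> (a 0 + a 1 \<le> b 1 + b 1 \<and> a 1 + a 1 \<le> b 0 + b 1) \<or> (a 0 + a 2 \<le> b 0 + b 3 \<and> a 0 + a 3 \<le> b 0 + b 2) \<or> (a 0 + a 2 \<le> b 1 + b 1 \<and> a 1 + a 1 \<le> b 0 + b 2) \<or> (a 0 + a 2 \<le> b 1 + b 2 \<and> a 1 + a 2 \<le> b 0 + b 2) \<or> (a 0 + a 3 \<le> b 1 + b 1 \<and> a 1 + a 1 \<le> b 0 + b 3) \<or> (a 0 + a 3 \<le> b 1 + b 2 \<and> a 1 + a 2 \<le> b 0 + b 3) \<or> (a 0 + a 3 \<le> b 1 + b 3 \<and> a 1 + a 3 \<le> b 0 + b 3) \<or> (a 0 + a 3 \<le> b 2 + b 2 \<and> a 2 + a 2 \<le> b 0 + b 3) \<or> (a 0 + a 3 \<le> b 3 + b 3 \<and>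 a 3 + a 3 \<le> b 0 + b 3) \<or> (a 1 + a 1 \<le> b 1 + b 2 \<and> a 1 + a 2 \<le> b 1 + b 1) \<or> (a 1 + a 1 \<le> b 1 + b 3 \<and> a 1 + a 3 \<le> b 1 + b 1) \<or> (a 1 + a 2 \<le> b 1 + b 3 \<and> a 1 + a 3 \<le> b 1 + b 2) \<or> (a 1 + a 2 \<le> b 2 + b 2 \<and> a 2 + a 2 \<le> b 1 + b 2) \<or> (a 1 + a 3 \<le> b 2 + b 3 \<and> a 2 + a 3 \<le> b 1 + b 3) \<or> (a 1 + a 3 \<le> b 3 + b 3 \<and> a 3 + a 3 \<le> b 1 + b 3) \<or> (a 2 + a 2 \<le> b 2 + b 3 \<and> a 2 + a 3 \<le> b 2 + b 2) \<or> (a 2 + a 3 \<le> b 3 + b 3 \<and> a 3 + a 3 \<le> b 2 + b 3)"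
  unfolding viol_def ex4 by simp
lemma conv4_15: "viol a b 4 (\<lambda>i. ([0,-1,1,0]::int list) ! i) \<Longrightarrow> (a 0 + a 0 \<le> b 0 + b 1 \<and> a 0 + a 1 \<le> b 0 + b 0) \<or> (a 0 + a 0 \<le> b 0 + b 2 \<and> a 0 + a 2 \<le> b 0 + b 0) \<or> (a 0 + a 1 \<le> b 0 + b 2 \<and> a 0 + a 2 \<le> b 0 + b 1) \<or> (a 0 + a 1 \<le> b 0 + b 3 \<and> a 0 + a 3 \<le> b 0 + b 1) \<or> (a 0 + a 1 \<le> b 1 + b 1 \<and> a 1 + a 1 \<le> b 0 + b 1) \<or> (a 0 + a 2 \<le> b 0 + b 3 \<and> a 0 + a 3 \<le> b 0 + b 2) \<or> (a 0 + a 2 \<le> b 1 + b 1 \<and> a 1 + a 1 \<le> b 0 + b 2) \<or> (a 0 + a 2 \<le> b 1 + b 2 \<and> a 1 + a 2 \<le> b 0 + b 2) \<or> (a 0 + a 2 \<le> b 2 + b 2 \<and> a 2 + a 2 \<le> b 0 + b 2) \<or> (a 0 + a 3 \<le> b 1 + b 1 \<and> a 1 + a 1 \<le> b 0 + b 3) \<or> (a 0 + a 3 \<le> b 1 + b 3 \<and> a 1 + a 3 \<le> b 0 + b 3) \<or> (a 0 + a 3 \<le> b 2 + b 2 \<and> a 2 + a 2 \<le> b 0 + b 3) \<or> (a 0 + a 3 \<le> b 2 + b 3 \<and> a 2 + a 3 \<le> b 0 + b 3) \<or> (a 1 + a 1 \<le> b 1 + b 2 \<and> a 1 + a 2 \<le>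 b 1 + b 1) \<or> (a 1 + a 1 \<le> b 1 + b 3 \<and> a 1 + a 3 \<le> b 1 + b 1) \<or> (a 1 + a 2 \<le> b 1 + b 3 \<and> a 1 + a 3 \<le> b 1 + b 2) \<or> (a 1 + a 2 \<le> b 2 + b 2 \<and> a 2 + a 2 \<le> b 1 + b 2) \<or> (a 1 + a 3 \<le> b 2 + b 2 \<and> a 2 + a 2 \<le> b 1 + b 3) \<or> (a 1 + a 3 \<le> b 2 + b 3 \<and> a 2 + a 3 \<le> b 1 + b 3) \<or> (a 1 + a 3 \<le> b 3 + b 3 \<and> a 3 + a 3 \<le> b 1 + b 3) \<or> (a 2 + a 2 \<le> b 2 + b 3 \<and> a 2 + a 3 \<le> b 2 + b 2) \<or> (a 2 + a 3 \<le> b 3 + b 3 \<and> a 3 + a 3 \<le> b 2 + b 3)"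
  unfolding viol_def ex4 by simp
lemma conv4_16: "viol a b 4 (\<lambda>i. ([0,0,-1,-2]::int list) ! i) \<Longrightarrow> (a 0 + a 0 \<le> b 0 + b 2 \<and> a 0 + a 2 \<le> b 0 + b 0) \<or> (a 0 + a 0 \<le> b 0 + b 3 \<and> a 0 + a 3 \<le> b 0 + b 0) \<or> (a 0 + a 1 \<le> b 0 + b 2 \<and> a 0 + a 2 \<le> b 0 + b 1) \<or> (a 0 + a 1 \<le> b 0 + b 3 \<and> a 0 + a 3 \<le> b 0 + b 1) \<or> (a 0 + a 2 \<le> b 0 + b 3 \<and> a 0 + a 3 \<le> b 0 + b 2) \<or> (a 0 + a 2 \<le> b 1 + b 1 \<and> a 1 + a 1 \<le> b 0 + b 2) \<or> (a 0 + a 2 \<le> b 2 + b 2 \<and> a 2 + a 2 \<le> b 0 + b 2) \<or> (a 0 + a 3 \<le> b 1 + b 1 \<and> a 1 + a 1 \<le> b 0 + b 3) \<or> (a 0 + a 3 \<le> b 1 + b 2 \<and> a 1 + a 2 \<le> b 0 + b 3) \<or> (a 0 + a 3 \<le> b 2 + b 3 \<and> a 2 + a 3 \<le> b 0 + b 3) \<or> (a 0 + a 3 \<le> b 3 + b 3 \<and> a 3 + a 3 \<le> b 0 + b 3) \<or> (a 1 + a 1 \<le> b 1 + b 2 \<and> a 1 + a 2 \<le> b 1 + b 1) \<or> (a 1 + a 1 \<le> b 1 + b 3 \<and> a 1 + a 3 \<le> b 1 + b 1) \<or> (a 1 + a 2 \<le> b 1 + b 3 \<and> a 1 + a 3 \<le>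 b 1 + b 2) \<or> (a 1 + a 2 \<le> b 2 + b 2 \<and> a 2 + a 2 \<le> b 1 + b 2) \<or> (a 1 + a 3 \<le> b 2 + b 3 \<and> a 2 + a 3 \<le> b 1 + b 3) \<or> (a 1 + a 3 \<le> b 3 + b 3 \<and> a 3 + a 3 \<le> b 1 + b 3) \<or> (a 2 + a 2 \<le> b 2 + b 3 \<and> a 2 + a 3 \<le> b 2 + b 2) \<or> (a 2 + a 3 \<le> b 3 + b 3 \<and> a 3 + a 3 \<le> b 2 + b 3)"
  unfolding viol_def ex4 by simp
lemma conv4_17: "viol a b 4 (\<lambda>i. ([0,0,-1,-1]::int list) ! i) \<Longrightarrow> (a 0 + a 0 \<le> b 0 + b 2 \<and> a 0 + a 2 \<le> b 0 + b 0) \<or> (a 0 + a 0 \<le> b 0 + b 3 \<and> a 0 + a 3 \<le> b 0 + b 0) \<or> (a 0 + a 1 \<le> b 0 + b 2 \<and> a 0 + a 2 \<le> b 0 + b 1) \<or> (a 0 + a 1 \<le> b 0 + b 3 \<and> a 0 + a 3 \<le> b 0 + b 1) \<or> (a 0 + a 2 \<le> b 1 + b 1 \<and> a 1 + a 1 \<le> b 0 + b 2) \<or> (a 0 + a 2 \<le> b 2 + b 2 \<and> a 2 + a 2 \<le> b 0 + b 2) \<or> (a 0 + a 3 \<le> b 1 + b 1 \<and> a 1 + a 1 \<le> b 0 + b 3) \<or> (a 0 + a 3 \<le> b 2 + b 2 \<and> a 2 + a 2 \<le> b 0 + b 3) \<or> (a 0 + a 3 \<le> b 2 + b 3 \<and>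 a 2 + a 3 \<le> b 0 + b 3) \<or> (a 0 + a 3 \<le> b 3 + b 3 \<and> a 3 + a 3 \<le> b 0 + b 3) \<or> (a 1 + a 1 \<le> b 1 + b 2 \<and> a 1 + a 2 \<le> b 1 + b 1) \<or> (a 1 + a 1 \<le> b 1 + b 3 \<and> a 1 + a 3 \<le> b 1 + b 1) \<or> (a 1 + a 2 \<le> b 2 + b 2 \<and> a 2 + a 2 \<le> b 1 + b 2) \<or> (a 1 + a 3 \<le> b 2 + b 2 \<and> a 2 + a 2 \<le> b 1 + b 3) \<or> (a 1 + a 3 \<le> b 2 + b 3 \<and> a 2 + a 3 \<le> b 1 + b 3) \<or> (a 1 + a 3 \<le> b 3 + b 3 \<and> a 3 + a 3 \<le> b 1 + b 3)"
  unfolding viol_def ex4 by simp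
lemma conv4_18: "viol a b 4 (\<lambda>i. ([0,0,-1,0]::int list) ! i) \<Longrightarrow> (a 0 + a 0 \<le> b 0 + b 2 \<and> a 0 + a 2 \<le> b 0 + b 0) \<or> (a 0 + a 1 \<le> b 0 + b 2 \<and> a 0 + a 2 \<le> b 0 + b 1) \<or> (a 0 + a 2 \<le> b 0 + b 3 \<and> a 0 + a 3 \<le> b 0 + b 2) \<or> (a 0 + a 2 \<le> b 1 + b 1 \<and> a 1 + a 1 \<le> b 0 + b 2) \<or> (a 0 + a 2 \<le> b 2 + b 2 \<and> a 2 + a 2 \<le> b 0 + b 2) \<or> (a 0 + a 3 \<le> b 1 + b 2 \<and> a 1 + a 2 \<le> b 0 + b 3) \<or> (a 0 + a 3 \<le> b 2 + b 2 \<and> a 2 + a 2 \<le> b 0 + b 3) \<or> (a 0 + a 3 \<le> b 2 + b 3 \<and> a 2 + a 3 \<le> b 0 + b 3) \<or> (a 1 + a 1 \<le> b 1 + b 2 \<and> a 1 + a 2 \<le> b 1 + b 1) \<or> (a 1 + a 2 \<le> b 1 + b 3 \<and> a 1 + a 3 \<le> b 1 + b 2) \<or> (a 1 + a 2 \<le> b 2 + b 2 \<and> a 2 + a 2 \<le> b 1 + b 2) \<or> (a 1 + a 3 \<le> b 2 + b 2 \<and> a 2 + a 2 \<le> b 1 + b 3) \<or> (a 1 + a 3 \<le> b 2 + b 3 \<and> a 2 + a 3 \<le> b 1 + b 3) \<or> (a 2 + a 2 \<le> b 2 + b 3 \<and> a 2 + a 3 \<le> b 2 + b 2) \<or> (a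 2 + a 3 \<le> b 3 + b 3 \<and> a 3 + a 3 \<le> b 2 + b 3)"
  unfolding viol_def ex4 by simp
lemma conv4_19: "viol a b 4 (\<lambda>i. ([0,0,0,-1]::int list) ! i) \<Longrightarrow> (a 0 + a 0 \<le> b 0 + b 3 \<and> a 0 + a 3 \<le> b 0 + b 0) \<or> (a 0 + a 1 \<le> b 0 + b 3 \<and> a 0 + a 3 \<le> b 0 + b 1) \<or> (a 0 + a 2 \<le> b 0 + b 3 \<and> a 0 + a 3 \<le> b 0 + b 2) \<or> (a 0 + a 3 \<le> b 1 + b 1 \<and> a 1 + a 1 \<le> b 0 + b 3) \<or> (a 0 + a 3 \<le> b 1 + b 2 \<and> a 1 + a 2 \<le> b 0 + b 3) \<or> (a 0 + a 3 \<le> b 2 + b 2 \<and> a 2 + a 2 \<le> b 0 + b 3) \<or> (a 0 + a 3 \<le> b 3 + b 3 \<and> a 3 + a 3 \<le> b 0 + b 3) \<or> (a 1 + a 1 \<le> b 1 + b 3 \<and> a 1 + a 3 \<le> b 1 + b 1) \<or> (a 1 + a 2 \<le> b 1 + b 3 \<and> a 1 + a 3 \<le> b 1 + b 2) \<or> (a 1 + a 3 \<le> b 2 + b 2 \<and> a 2 + a 2 \<le> b 1 + b 3) \<or> (a 1 + a 3 \<le> b 3 + b 3 \<and> a 3 + a 3 \<le> b 1 + b 3) \<or> (a 2 + a 2 \<le> b 2 + b 3 \<and> a 2 + a 3 \<le> b 2 + b 2) \<or> (a 2 + a 3 \<le> b 3 + b 3 \<and> a 3 + a 3 \<le> b 2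 + b 3)"
  unfolding viol_def ex4 by simp
lemma core4:
  fixes a b :: "nat \<Rightarrow> int"
  assumes "a 0 \<le> b 0" and "a 1 \<le> b 1" and "a 2 \<le> b 2" and "a 3 \<le> b 3"
    and "b 0 < a 1" and "b 1 < a 2" and "b 2 < a 3"
    and v0: "viol a b 4 (\<lambda>i. ([0,-2,-3,-4]::int list) ! i)"
    and v1: "viol a b 4 (\<lambda>i. ([0,-2,-1,-2]::int list) ! i)"
    and v2: "viol a b 4 (\<lambda>i. ([0,-2,-1,0]::int list) ! i)"
    and v3: "viol a b 4 (\<lambda>i. ([0,-1,-2,-4]::int list) ! i)"
    and v4: "viol a b 4 (\<lambda>i. ([0,-1,-2,-3]::int list) ! i)"
    and v5: "viol a b 4 (\<lambda>i. ([0,-1,-2,-2]::int list) ! i)"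
    and v6: "viol a b 4 (\<lambda>i. ([0,-1,-2,-1]::int list) ! i)"
    and v7: "viol a b 4 (\<lambda>i. ([0,-1,-2,0]::int list) ! i)"
    and v8: "viol a b 4 (\<lambda>i. ([0,-1,-1,-2]::int list) ! i)"
    and v9: "viol a b 4 (\<lambda>i. ([0,-1,-1,-1]::int list) ! i)"
    and v10: "viol a b 4 (\<lambda>i. ([0,-1,-1,0]::int list) ! i)"
    and v11: "viol a b 4 (\<lambda>i. ([0,-1,0,-2]::int list) ! i)"
    and v12: "viol a b 4 (\<lambda>i. ([0,-1,0,-1]::int list) ! i)"
    and v13: "viol a b 4 (\<lambda>i. ([0,-1,0,0]::int list) ! i)"
    and v14: "viol a b 4 (\<lambda>i. ([0,-1,0,1]::int list) ! i)"
    and v15: "viol a b 4 (\<lambda>i. ([0,-1,1,0]::int list) ! i)"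
    and v16: "viol a b 4 (\<lambda>i. ([0,0,-1,-2]::int list) ! i)"
    and v17: "viol a b 4 (\<lambda>i. ([0,0,-1,-1]::int list) ! i)"
    and v18: "viol a b 4 (\<lambda>i. ([0,0,-1,0]::int list) ! i)"
    and v19: "viol a b 4 (\<lambda>i. ([0,0,0,-1]::int list) ! i)"
  shows "b 3 - a 0 \<le> 8 * ((b 0 - a 0) + (b 1 - a 1) + (b 2 - a 2) + (b 3 - a 3))"
proof -
  note h0 = conv4_0[OF v0]
  note h1 = conv4_1[OF v1]
  note h2 = conv4_2[OF v2]
  note h3 = conv4_3[OF v3]
  note h4 = conv4_4[OF v4]
  note h5 = conv4_5[OF v5]
  note h6 = conv4_6[OF v6]
  note h7 = conv4_7[OF v7]
  note h8 = conv4_8[OF v8]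
  note h9 = conv4_9[OF v9]
  note h10 = conv4_10[OF v10]
  note h11 = conv4_11[OF v11]
  note h12 = conv4_12[OF v12]
  note h13 = conv4_13[OF v13]
  note h14 = conv4_14[OF v14]
  note h15 = conv4_15[OF v15]
  note h16 = conv4_16[OF v16]
  note h17 = conv4_17[OF v17]
  note h18 = conv4_18[OF v18]
  note h19 = conv4_19[OF v19]
  show ?thesis using assms(1-7) h0 h1 h2 h3 h4 h5 h6 h7 h8 h9 h10 h11 h12 h13 h14 h15 h16 h17 h18 h19 by smt
qed
lemma bound4:
  fixes a b :: "nat \<Rightarrow> int"
  assumes finA: "finite A" and fd: "fdim A = 1"
    and Aeq: "A = (\<Union>j<4. {a j..b j})"
    and ab: "\<forall>j<4. a j \<le> b j" and ord: "\<forall>j. Suc j < 4 \<longrightarrow> b j < a (Suc j)"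
    and j0: "j0 < 4" "a j0 < b j0"
  shows "b 3 - a 0 \<le> 8 * (\<Sum>j<4. b j - a j)"
proof -
  have v0: "viol a b 4 (\<lambda>i. ([0,-2,-3,-4]::int list) ! i)"
    by (rule step_viol[OF finA fd Aeq ab ord j0, of 1]) simp_all
  have v1: "viol a b 4 (\<lambda>i. ([0,-2,-1,-2]::int list) ! i)"
    by (rule step_viol[OF finA fd Aeq ab ord j0, of 1]) simp_all
  have v2: "viol a b 4 (\<lambda>i. ([0,-2,-1,0]::int list) ! i)"
    by (rule step_viol[OF finA fd Aeq ab ord j0, of 1]) simp_all
  have v3: "viol a b 4 (\<lambda>i. ([0,-1,-2,-4]::int list) ! i)"
    by (rule step_viol[OF finA fd Aeq ab ord j0, of 1]) simp_all
  have v4: "viol a b 4 (\<lambda>i. ([0,-1,-2,-3]::int list) ! i)"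
    by (rule step_viol[OF finA fd Aeq ab ord j0, of 1]) simp_all
  have v5: "viol a b 4 (\<lambda>i. ([0,-1,-2,-2]::int list) ! i)"
    by (rule step_viol[OF finA fd Aeq ab ord j0, of 1]) simp_all
  have v6: "viol a b 4 (\<lambda>i. ([0,-1,-2,-1]::int list) ! i)"
    by (rule step_viol[OF finA fd Aeq ab ord j0, of 1]) simp_all
  have v7: "viol a b 4 (\<lambda>i. ([0,-1,-2,0]::int list) ! i)"
    by (rule step_viol[OF finA fd Aeq ab ord j0, of 1]) simp_all
  have v8: "viol a b 4 (\<lambda>i. ([0,-1,-1,-2]::int list) ! i)"
    by (rule step_viol[OF finA fd Aeq ab ord j0, of 1]) simp_all
  have v9: "viol a b 4 (\<lambda>i. ([0,-1,-1,-1]::int list) ! i)"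
    by (rule step_viol[OF finA fd Aeq ab ord j0, of 1]) simp_all
  have v10: "viol a b 4 (\<lambda>i. ([0,-1,-1,0]::int list) ! i)"
    by (rule step_viol[OF finA fd Aeq ab ord j0, of 1]) simp_all
  have v11: "viol a b 4 (\<lambda>i. ([0,-1,0,-2]::int list) ! i)"
    by (rule step_viol[OF finA fd Aeq ab ord j0, of 1]) simp_all
  have v12: "viol a b 4 (\<lambda>i. ([0,-1,0,-1]::int list) ! i)"
    by (rule step_viol[OF finA fd Aeq ab ord j0, of 1]) simp_all
  have v13: "viol a b 4 (\<lambda>i. ([0,-1,0,0]::int list) ! i)"
    by (rule step_viol[OF finA fd Aeq ab ord j0, of 1]) simp_all
  have v14: "viol a b 4 (\<lambda>i. ([0,-1,0,1]::int list) ! i)"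
    by (rule step_viol[OF finA fd Aeq ab ord j0, of 1]) simp_all
  have v15: "viol a b 4 (\<lambda>i. ([0,-1,1,0]::int list) ! i)"
    by (rule step_viol[OF finA fd Aeq ab ord j0, of 1]) simp_all
  have v16: "viol a b 4 (\<lambda>i. ([0,0,-1,-2]::int list) ! i)"
    by (rule step_viol[OF finA fd Aeq ab ord j0, of 2]) simp_all
  have v17: "viol a b 4 (\<lambda>i. ([0,0,-1,-1]::int list) ! i)"
    by (rule step_viol[OF finA fd Aeq ab ord j0, of 2]) simp_all
  have v18: "viol a b 4 (\<lambda>i. ([0,0,-1,0]::int list) ! i)"
    by (rule step_viol[OF finA fd Aeq ab ord j0, of 2]) simp_all
  have v19: "viol a b 4 (\<lambda>i. ([0,0,0,-1]::int list) ! i)"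
    by (rule step_viol[OF finA fd Aeq ab ord j0, of 3]) simp_all
  have o1_0: "a 0 \<le> b 0" using ab by simp
  have o1_1: "a 1 \<le> b 1" using ab by simp
  have o1_2: "a 2 \<le> b 2" using ab by simp
  have o1_3: "a 3 \<le> b 3" using ab by simp
  have o2_0: "b 0 < a 1" using ord[rule_format, of 0] by (simp add: numeral_eq_Suc)
  have o2_1: "b 1 < a 2" using ord[rule_format, of 1] by (simp add: numeral_eq_Suc)
  have o2_2: "b 2 < a 3" using ord[rule_format, of 2] by (simp add: numeral_eq_Suc)
  have "b 3 - a 0 \<le> 8 * ((b 0 - a 0) + (b 1 - a 1) + (b 2 - a 2) + (b 3 - a 3))"
    by (rule core4) (use o1_0 o1_1 o1_2 o1_3 o2_0 o2_1 o2_2 v0 v1 v2 v3 v4 v5 v6 v7 v8 v9 v10 v11 v12 v13 v14 v15 v16 v17 v18 v19 in simp_all)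
  then show ?thesis by (simp add: numeral_eq_Suc)
qed


theorem proposition1p4:
  fixes A :: "int set" and s :: nat
  assumes "finite A"
    and "fdim A = 1"
    and "s = seg_num A"
    and "s \<le> 4"
    and "s \<le> card A - 1"
  shows "fvol A \<le> 2 ^ (s - 1) * (card A - s) + 1"
proof -
  note finA = assms(1) and fd = assms(2)
  obtain a b where ab: "\<forall>j<s. a j \<le> b j" and ord: "\<forall>j. Suc j < s \<longrightarrow> b j < a (Suc j)"
    and Aeq: "A = (\<Union>j<s. {a j..b j})"
    using seg_structure[OF finA] assms(3) by blast
  have mono: "\<And>i k. i < k \<Longrightarrow> k < s \<Longrightarrow> b i < a k" using b_lt_a[OF ab ord] by blast
  define D where "D = (\<Sum>j<s. b j - a j)"
  have D0: "0 \<le> D" unfolding D_def by (rule sum_nonneg) (use ab in auto)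
  have disj: "{a i..b i} \<inter> {a j..b j} = {}" if "i < s" "j < s" "i \<noteq> j" for i j
  proof (cases "i < j")
    case True then have "b i < a j" using mono that by blast
    then show ?thesis by auto
  next
    case False then have "j < i" using that by simp
    then have "b j < a i" using mono that by blast
    then show ?thesis by auto
  qed
  have "card A = (\<Sum>j<s. card {a j..b j})"
    unfolding Aeq by (rule card_UN_disjoint) (use disj in auto)
  then have "int (card A) = (\<Sum>j<s. int (nat (b j - a j + 1)))" by simp
  also have "\<dots> = (\<Sum>j<s. (b j - a j) + 1)" by (rule sum.cong) (use ab in auto)
  also have "\<dots> = D + int s" unfolding D_def by (simp add: sum.distrib)
  finally have cardA: "int (card A) = D + int s" .
  have sle: "s \<le> card A" using cardA D0 by linarith
  have cAs: "int (card A - s) = D" using cardA sle by (simp add: of_nat_diff)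
  show ?thesis
  proof (cases "s = 0")
    case True
    then have "A = {}" using Aeq by simp
    then have "fvol A \<le> nat (0 - 0 + 1)" by (intro fvol_le[OF fd]) auto
    then show ?thesis by simp
  next
    case False
    have lo: "\<forall>x\<in>A. a 0 \<le> x"
    proof
      fix x assume "x \<in> A"
      then obtain j where j: "j < s" "a j \<le> x" using Aeq by auto
      have "a 0 \<le> a j"
      proof (cases "j = 0")
        case False
        then have "b 0 < a j" using mono j by blast
        moreover have "a 0 \<le> b 0" using ab j by auto
        ultimately show ?thesis by simp
      qed simp
      then show "a 0 \<le> x" using j by simp
    qed
    have hi: "\<forall>x\<in>A. x \<le> b (s - 1)"
    proof
      fix x assume "x \<in> A"
      then obtain j where j: "j < s" "x \<le> b j" using Aeq by auto
      have "b j \<le> b (s - 1)"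
      proof (cases "j = s - 1")
        case False
        then have "b j < a (s - 1)" using mono j by (metis Suc_pred' \<open>s \<noteq> 0\<close> less_SucE not_gr_zero lessI)
        moreover have "a (s - 1) \<le> b (s - 1)" using ab \<open>s \<noteq> 0\<close> by auto
        ultimately show ?thesis by simp
      qed simp
      then show "x \<le> b (s - 1)" using j by simp
    qed
    have fv: "fvol A \<le> nat (b (s - 1) - a 0 + 1)" by (rule fvol_le[OF fd lo hi])
    have key: "b (s - 1) - a 0 \<le> 2 ^ (s - 1) * D"
    proof (cases "s = 1")
      case True
      then show ?thesis unfolding D_def by simp
    next
      case False
      then have s2: "2 \<le> s" using \<open>s \<noteq> 0\<close> by simp
      have "D \<ge> 1" using cardA assms(5) s2 by linarith
      have "\<exists>j0<s. a j0 < b j0"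
      proof (rule ccontr)
        assume "\<not> (\<exists>j0<s. a j0 < b j0)"
        then have "\<forall>j<s. b j - a j = 0" using ab by force
        then have "D = 0" unfolding D_def by simp
        with \<open>D \<ge> 1\<close> show False by simp
      qed
      then obtain j0 where j0: "j0 < s" "a j0 < b j0" by blast
      have "s = 2 \<or> s = 3 \<or> s = 4" using s2 assms(4) by linarith
      then show ?thesis
      proof (elim disjE)
        assume s: "s = 2"
        show ?thesis using bound2[OF finA fd Aeq[unfolded s] ab[unfolded s] ord[unfolded s] j0[unfolded s]]
          unfolding D_def s by simp
      next
        assume s: "s = 3"
        show ?thesis using bound3[OF finA fd Aeq[unfolded s] ab[unfolded s] ord[unfolded s] j0[unfolded s]]
          unfolding D_def s by simp
      next
        assume s: "s = 4"
        show ?thesis using bound4[OF finA fd Aeq[unfolded s] ab[unfolded s] ord[unfolded s] j0[unfolded s]]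
          unfolding D_def s by simp
      qed
    qed
    have a0A: "a 0 \<in> A" using Aeq ab \<open>s \<noteq> 0\<close> by (auto intro!: bexI[of _ 0])
    have "a 0 \<le> b (s - 1)" using hi a0A by blast
    then have "int (nat (b (s - 1) - a 0 + 1)) = b (s - 1) - a 0 + 1" by simp
    moreover have "int (fvol A) \<le> int (nat (b (s - 1) - a 0 + 1))" using fv by (simp only: of_nat_le_iff)
    ultimately have "int (fvol A) \<le> b (s - 1) - a 0 + 1" by simp
    also have "\<dots> \<le> 2 ^ (s - 1) * D + 1" using key by simp
    also have "\<dots> = int (2 ^ (s - 1) * (card A - s) + 1)" using cAs by simp
    finally show ?thesis by linarith
  qed
qed


end
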